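(* For every prime $p$, $\operatorname{rank}_{\mathbb Z}K(C_p\times C_p,C_p)=p^2$.
   Context: For $K\le G=C_p\times C_p$ and a homomorphism $\rho:K\to C_p$, $K\times\rho=\{(k,\rho(k))\}\le G\times C_p$. $B(G,C_p)$ is the subgroup of the Burnside ring $B(G\times C_p)$ (free on the subgroups of $G\times C_p$) spanned by graphs. $K(G\times C_p)$ is the kernel of $B(G\times C_p)\to R_{\mathbb Q}(G\times C_p)$, $S\mapsto[\mathbb Q[(G\times C_p)/S]]$, and $K(G,C_p)=K(G\times C_p)\cap B(G,C_p)$. *)

theory Defs
  imports "HOL-Algebra.Algebra" "HOL-Computational_Algebra.Primes"
begin

abbreviation Cyc :: "nat \<Rightarrow> int monoid" where
  "Cyc n \<equiv> integer_mod_group n"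

definition hom_graph :: "'a set \<Rightarrow> ('a \<Rightarrow> 'b) \<Rightarrow> ('a \<times> 'b) set" where
  "hom_graph K \<rho> = (\<lambda>k. (k, \<rho> k)) ` K"

definition is_graph :: "('a, 'c) monoid_scheme \<Rightarrow> ('b, 'd) monoid_scheme \<Rightarrow> ('a \<times> 'b) set \<Rightarrow> bool" where
  "is_graph G H L \<longleftrightarrow>
     (\<exists>K \<rho>. subgroup K G \<and> \<rho> \<in> hom (G\<lparr>carrier := K\<rparr>) H \<and> L = hom_graph K \<rho>)"

text \<open>For an abelian group, conjugacy classes of subgroups are just subgroups,
  so B(W) is the free abelian group on the subgroups of W, modelled as
  integer-valued functions on sets supported on subgroups.\<close>

definition burnside :: "('a, 'c) monoid_scheme \<Rightarrow> ('a set \<Rightarrow> int) set" where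
  "burnside W = {x. \<forall>S. x S \<noteq> 0 \<longrightarrow> subgroup S W}"

text \<open>The W-set which is the disjoint union, over subgroups S, of m S copies of W/S.\<close>
definition psets :: "('a, 'c) monoid_scheme \<Rightarrow> ('a set \<Rightarrow> nat) \<Rightarrow> ('a set \<times> nat \<times> 'a set) set" where
  "psets W m = {(S, j, C). subgroup S W \<and> j < m S \<and> C \<in> lcosets\<^bsub>W\<^esub> S}"

definition cact :: "('a, 'c) monoid_scheme \<Rightarrow> 'a \<Rightarrow> ('a set \<times> nat \<times> 'a set) \<Rightarrow> ('a set \<times> nat \<times> 'a set)" where
  "cact W g = (\<lambda>(S, j, C). (S, j, l_coset W g C))"

definition Qfun :: "'x set \<Rightarrow> ('x \<Rightarrow> rat) set" where
  "Qfun Xs = {f. \<forall>x. x \<notin> Xs \<longrightarrow> f x = 0}"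

definition pact :: "('g, 'c) monoid_scheme \<Rightarrow> ('g \<Rightarrow> 'x \<Rightarrow> 'x) \<Rightarrow> 'x set \<Rightarrow> 'g \<Rightarrow> ('x \<Rightarrow> rat) \<Rightarrow> ('x \<Rightarrow> rat)" where
  "pact W a Xs g f = (\<lambda>x. if x \<in> Xs then f (a (inv\<^bsub>W\<^esub> g) x) else 0)"

definition rep_iso :: "('g, 'c) monoid_scheme \<Rightarrow> ('g \<Rightarrow> 'x \<Rightarrow> 'x) \<Rightarrow> 'x set
                      \<Rightarrow> ('g \<Rightarrow> 'y \<Rightarrow> 'y) \<Rightarrow> 'y set \<Rightarrow> bool" where
  "rep_iso W a Xs b Ys \<longleftrightarrow>
     (\<exists>T. bij_betw T (Qfun Xs) (Qfun Ys)
        \<and> (\<forall>f\<in>Qfun Xs. \<forall>h\<in>Qfun Xs. T (\<lambda>x. f x + h x) = (\<lambda>y. T f y + T h y))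
        \<and> (\<forall>c. \<forall>f\<in>Qfun Xs. T (\<lambda>x. c * f x) = (\<lambda>y. c * T f y))
        \<and> (\<forall>g\<in>carrier W. \<forall>f\<in>Qfun Xs. T (pact W a Xs g f) = pact W b Ys g (T f)))"

text \<open>x = sum_S x_S [W/S] maps to 0 in the Grothendieck group R_Q(W) iff
  the permutation modules of the positive and negative parts are isomorphic.\<close>
definition burnside_kernel :: "('a, 'c) monoid_scheme \<Rightarrow> ('a set \<Rightarrow> int) set" where
  "burnside_kernel W = {x \<in> burnside W.
      rep_iso W (cact W) (psets W (\<lambda>S. nat (x S))) (cact W) (psets W (\<lambda>S. nat (- x S)))}"

text \<open>B(G,H): span of the graphs inside B(G x H); K(G,H) = K(G x H) \<inter> B(G,H).\<close>
definition burnside_bi :: "('a, 'c) monoid_scheme \<Rightarrow> ('b, 'd) monoid_scheme \<Rightarrow> (('a \<times> 'b) set \<Rightarrow> int) set" where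
  "burnside_bi G H = {x \<in> burnside (G \<times>\<times> H). \<forall>L. x L \<noteq> 0 \<longrightarrow> is_graph G H L}"

definition kernel_bi :: "('a, 'c) monoid_scheme \<Rightarrow> ('b, 'd) monoid_scheme \<Rightarrow> (('a \<times> 'b) set \<Rightarrow> int) set" where
  "kernel_bi G H = burnside_kernel (G \<times>\<times> H) \<inter> burnside_bi G H"

definition int_indep :: "('s \<Rightarrow> int) set \<Rightarrow> bool" where
  "int_indep A \<longleftrightarrow> (\<forall>c. (\<lambda>S. \<Sum>v\<in>A. c v * v S) = (\<lambda>S. 0) \<longrightarrow> (\<forall>v\<in>A. c v = 0))"

definition zrank :: "('s \<Rightarrow> int) set \<Rightarrow> nat" where
  "zrank M = (GREATEST n. \<exists>A. A \<subseteq> M \<and> finite A \<and> card A = n \<and> int_indep A)"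

end

theory Submission
  imports Defs
begin

lemma elim_lemma:
  fixes f :: "'i \<Rightarrow> 's \<Rightarrow> 'r::idom"
  assumes "finite P" "finite I" "card P < card I"
  shows "\<exists>c. (\<exists>i\<in>I. c i \<noteq> 0) \<and> (\<forall>s\<in>P. (\<Sum>i\<in>I. c i * f i s) = 0)"
  using assms
proof (induction P arbitrary: I f rule: finite_induct)
  case empty
  then have "I \<noteq> {}" by auto
  then show ?case by (rule_tac x="\<lambda>_. 1" in exI) auto
next
  case (insert s P)
  show ?case
  proof (cases "\<forall>i\<in>I. f i s = 0")
    case True
    from insert have "card P < card I" by simp
    from insert.IH[OF insert.prems(1) this] obtain c where
      c: "\<exists>i\<in>I. c i \<noteq> 0" "\<forall>t\<in>P. (\<Sum>i\<in>I. c i * f i t) = 0" by blast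
    show ?thesis using c True by (rule_tac x=c in exI) auto
  next
    case False
    then obtain i0 where i0: "i0 \<in> I" "f i0 s \<noteq> 0" by blast
    define I' where "I' = I - {i0}"
    define g where "g i t = f i0 s * f i t - f i s * f i0 t" for i t
    have fI': "finite I'" using insert.prems I'_def by simp
    have cI': "card I' = card I - 1" using i0 insert.prems I'_def by simp
    have "card P < card I'" using insert cI' by simp
    from insert.IH[OF fI' this] obtain c' where
      c': "\<exists>i\<in>I'. c' i \<noteq> 0" "\<forall>t\<in>P. (\<Sum>i\<in>I'. c' i * g i t) = 0" by blast
    define c where "c i = (if i = i0 then - (\<Sum>j\<in>I'. c' j * f j s) else c' i * f i0 s)" for i
    have key: "(\<Sum>i\<in>I. c i * f i t) = (\<Sum>i\<in>I'. c' i * g i t)" for t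
    proof -
      have "(\<Sum>i\<in>I. c i * f i t) = c i0 * f i0 t + (\<Sum>i\<in>I'. c i * f i t)"
        using i0 insert.prems I'_def by (simp add: sum.remove)
      also have "(\<Sum>i\<in>I'. c i * f i t) = (\<Sum>i\<in>I'. c' i * f i0 s * f i t)"
        by (rule sum.cong) (auto simp: c_def I'_def)
      also have "c i0 * f i0 t = - (\<Sum>j\<in>I'. c' j * f j s * f i0 t)"
        by (simp add: c_def sum_distrib_right)
      finally show ?thesis
        by (simp add: g_def algebra_simps sum_subtractf sum_distrib_left)
    qed
    show ?thesis
    proof (rule exI[of _ c], intro conjI)
      from c'(1) obtain j where "j \<in> I'" "c' j \<noteq> 0" by blast
      then show "\<exists>i\<in>I. c i \<noteq> 0" using i0 by (rule_tac x=j in bexI) (auto simp: c_def I'_def)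
      show "\<forall>t\<in>insert s P. (\<Sum>i\<in>I. c i * f i t) = 0"
        using c'(2) by (auto simp: key g_def)
    qed
  qed
qed

definition qlin :: "'x set \<Rightarrow> 'y set \<Rightarrow> (('x\<Rightarrow>rat)\<Rightarrow>('y\<Rightarrow>rat)) \<Rightarrow> bool" where
 "qlin A B T \<longleftrightarrow> (\<forall>f\<in>Qfun A. T f \<in> Qfun B)
    \<and> (\<forall>f\<in>Qfun A. \<forall>h\<in>Qfun A. T (\<lambda>x. f x + h x) = (\<lambda>y. T f y + T h y))
    \<and> (\<forall>c. \<forall>f\<in>Qfun A. T (\<lambda>x. c * f x) = (\<lambda>y. c * T f y))"

lemma Qfun_zero[simp]: "(\<lambda>_. 0) \<in> Qfun A" by (simp add: Qfun_def)
lemma Qfun_add[intro]: "f \<in> Qfun A \<Longrightarrow> h \<in> Qfun A \<Longrightarrow> (\<lambda>x. f x + h x) \<in> Qfun A"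
  by (simp add: Qfun_def)
lemma Qfun_smul[intro]: "f \<in> Qfun A \<Longrightarrow> (\<lambda>x. c * f x) \<in> Qfun A"
  by (simp add: Qfun_def)
lemma Qfun_sum[intro]: "(\<And>j. j \<in> J \<Longrightarrow> \<phi> j \<in> Qfun A) \<Longrightarrow> (\<lambda>x. \<Sum>j\<in>J. \<phi> j x) \<in> Qfun A"
  by (auto simp: Qfun_def intro!: sum.neutral)
lemma Qfun_out: "f \<in> Qfun A \<Longrightarrow> x \<notin> A \<Longrightarrow> f x = 0"
  by (simp add: Qfun_def)
lemma Qfun_delta[simp]: "x \<in> A \<Longrightarrow> (\<lambda>y. if y = x then 1 else 0) \<in> Qfun A"
  by (auto simp: Qfun_def)

lemma qlin_in: "qlin A B T \<Longrightarrow> f \<in> Qfun A \<Longrightarrow> T f \<in> Qfun B"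
  by (simp add: qlin_def)
lemma qlin_add: "qlin A B T \<Longrightarrow> f \<in> Qfun A \<Longrightarrow> h \<in> Qfun A \<Longrightarrow> T (\<lambda>x. f x + h x) = (\<lambda>y. T f y + T h y)"
  by (simp add: qlin_def)
lemma qlin_smul: "qlin A B T \<Longrightarrow> f \<in> Qfun A \<Longrightarrow> T (\<lambda>x. c * f x) = (\<lambda>y. c * T f y)"
  by (simp add: qlin_def)
lemma qlin_zero: "qlin A B T \<Longrightarrow> T (\<lambda>_. 0) = (\<lambda>_. 0)"
  using qlin_smul[of A B T "\<lambda>_. 0" 0] by simp

lemma qlin_sum:
  assumes "qlin A B T" "finite J" "\<And>j. j \<in> J \<Longrightarrow> \<phi> j \<in> Qfun A"
  shows "T (\<lambda>x. \<Sum>j\<in>J. \<phi> j x) = (\<lambda>y. \<Sum>j\<in>J. T (\<phi> j) y)"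
  using assms(2,3)
proof (induction J rule: finite_induct)
  case empty then show ?case using qlin_zero[OF assms(1)] by simp
next
  case (insert j J)
  have "T (\<lambda>x. \<Sum>j\<in>insert j J. \<phi> j x) = T (\<lambda>x. \<phi> j x + (\<Sum>j\<in>J. \<phi> j x))"
    using insert by simp
  also have "\<dots> = (\<lambda>y. T (\<phi> j) y + T (\<lambda>x. \<Sum>j\<in>J. \<phi> j x) y)"
    using qlin_add[OF assms(1), of "\<phi> j" "\<lambda>x. \<Sum>j\<in>J. \<phi> j x"] insert by (auto intro!: Qfun_sum)
  finally show ?case using insert by simp
qed

lemma qlin_diff:
  assumes "qlin A B T" "f \<in> Qfun A" "h \<in> Qfun A"
  shows "T (\<lambda>x. f x - h x) = (\<lambda>y. T f y - T h y)"
proof -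
  have "T (\<lambda>x. f x + (-1) * h x) = (\<lambda>y. T f y + T (\<lambda>x. (-1) * h x) y)"
    using assms by (intro qlin_add) (auto simp: Qfun_def)
  also have "T (\<lambda>x. (-1) * h x) = (\<lambda>y. (-1) * T h y)" using assms by (intro qlin_smul)
  finally show ?thesis by simp
qed

lemma qlin_inj:
  assumes "qlin A B T" "\<And>f. f \<in> Qfun A \<Longrightarrow> T f = (\<lambda>_. 0) \<Longrightarrow> f = (\<lambda>_. 0)"
  shows "inj_on T (Qfun A)"
proof (rule inj_onI)
  fix f h assume fh: "f \<in> Qfun A" "h \<in> Qfun A" "T f = T h"
  have "T (\<lambda>x. f x - h x) = (\<lambda>_. 0)" using qlin_diff[OF assms(1) fh(1,2)] fh(3) by simp
  then have "(\<lambda>x. f x - h x) = (\<lambda>_. 0)" using assms(2) fh by (simp add: Qfun_def)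
  then show "f = h" by (metis (no_types) eq_iff_diff_eq_0 ext)
qed

lemma qlin_expand:
  assumes "finite A" "f \<in> Qfun A"
  shows "f = (\<lambda>y. \<Sum>x\<in>A. f x * (if y = x then 1 else 0))"
proof
  fix y show "f y = (\<Sum>x\<in>A. f x * (if y = x then 1 else 0))"
    using assms by (cases "y \<in> A") (auto simp: Qfun_def if_distrib cong: if_cong)
qed

lemma qlin_surj:
  fixes T :: "('a \<Rightarrow> rat) \<Rightarrow> ('b \<Rightarrow> rat)"
  assumes lin: "qlin A B T" and fin: "finite A" "finite B" and cd: "card B \<le> card A"
    and inj0: "\<And>f. f \<in> Qfun A \<Longrightarrow> T f = (\<lambda>_. 0) \<Longrightarrow> f = (\<lambda>_. 0)"
  shows "bij_betw T (Qfun A) (Qfun B)"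
proof -
  have inj: "inj_on T (Qfun A)" by (rule qlin_inj[OF lin inj0])
  define \<delta> where "\<delta> x = (\<lambda>y. if y = x then (1::rat) else 0)" for x :: 'a
  have dQ: "x \<in> A \<Longrightarrow> \<delta> x \<in> Qfun A" for x by (simp add: \<delta>_def)
  have "Qfun B \<subseteq> T ` Qfun A"
  proof
    fix h assume hY: "h \<in> Qfun B"
    show "h \<in> T ` Qfun A"
    proof (rule ccontr)
      assume nh: "h \<notin> T ` Qfun A"
      define I where "I = insert None (Some ` A)"
      define F where "F i = (case i of None \<Rightarrow> h | Some x \<Rightarrow> T (\<delta> x))" for i
      have cI: "card I = card A + 1" using fin by (simp add: I_def card_image)
      have "card B < card I" using cd cI by simp
      from elim_lemma[OF fin(2) _ this, of F] obtain c where
        c: "\<exists>i\<in>I. c i \<noteq> 0" "\<forall>s\<in>B. (\<Sum>i\<in>I. c i * F i s) = 0" using fin I_def by auto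
      have sI: "(\<Sum>i\<in>I. c i * F i s) = c None * h s + (\<Sum>x\<in>A. c (Some x) * T (\<delta> x) s)" for s
        using fin by (simp add: I_def F_def sum.reindex)
      define \<phi> where "\<phi> = (\<lambda>y. \<Sum>x\<in>A. c (Some x) * \<delta> x y)"
      have \<phi>Q: "\<phi> \<in> Qfun A" unfolding \<phi>_def using dQ by (intro Qfun_sum Qfun_smul) auto
      have T\<phi>: "T \<phi> = (\<lambda>s. \<Sum>x\<in>A. c (Some x) * T (\<delta> x) s)"
      proof -
        have "T \<phi> = (\<lambda>s. \<Sum>x\<in>A. T (\<lambda>y. c (Some x) * \<delta> x y) s)"
          unfolding \<phi>_def using dQ fin by (intro qlin_sum[OF lin]) auto
        also have "\<dots> = (\<lambda>s. \<Sum>x\<in>A. c (Some x) * T (\<delta> x) s)"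
          using qlin_smul[OF lin dQ] by simp
        finally show ?thesis .
      qed
      have zero_all: "c None * h s + T \<phi> s = 0" for s
      proof (cases "s \<in> B")
        case True then show ?thesis using c(2) sI T\<phi> by simp
      next
        case False
        have "T \<phi> s = 0" using qlin_in[OF lin \<phi>Q] False by (simp add: Qfun_def)
        moreover have "h s = 0" using hY False by (simp add: Qfun_def)
        ultimately show ?thesis by simp
      qed
      show False
      proof (cases "c None = 0")
        case True
        then have "T \<phi> = (\<lambda>_. 0)" using zero_all by auto
        then have "\<phi> = (\<lambda>_. 0)" using inj0 \<phi>Q by blast
        then have "\<forall>x\<in>A. c (Some x) = 0"
        proof (intro ballI)
          fix x assume "x \<in> A" "\<phi> = (\<lambda>_. 0)"
          then have "\<phi> x = 0" by simp
          moreover have "\<phi> x = c (Some x)" using \<open>x \<in> A\<close> fin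
            by (simp add: \<phi>_def \<delta>_def if_distrib cong: if_cong)
          ultimately show "c (Some x) = 0" by simp
        qed
        then show False using c(1) True by (auto simp: I_def)
      next
        case False
        define \<psi> where "\<psi> = (\<lambda>y. (- 1 / c None) * \<phi> y)"
        have "\<psi> \<in> Qfun A" using \<phi>Q unfolding \<psi>_def by (rule Qfun_smul)
        moreover have "T \<psi> = h"
        proof
          fix s
          have "T \<psi> s = (- 1 / c None) * T \<phi> s" unfolding \<psi>_def using qlin_smul[OF lin \<phi>Q, of "- 1 / c None"] by (rule fun_cong)
          also have "T \<phi> s = - (c None * h s)" using zero_all[of s] by (simp add: add_eq_0_iff)
          finally show "T \<psi> s = h s" using False by simp
        qed
        ultimately show False using nh by blast
      qed
    qed
  qed
  moreover have "T ` Qfun A \<subseteq> Qfun B" using qlin_in[OF lin] by auto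
  ultimately show ?thesis using inj by (auto simp: bij_betw_def)
qed

lemma qlin_orbit_le:
  fixes T :: "('a \<Rightarrow> rat) \<Rightarrow> ('b \<Rightarrow> rat)" and pa :: "'a \<Rightarrow> 'k" and pb :: "'b \<Rightarrow> 'l"
  assumes lin: "qlin A B T" and fin: "finite A" "finite B"
    and inj0: "\<And>f. f \<in> Qfun A \<Longrightarrow> T f = (\<lambda>_. 0) \<Longrightarrow> f = (\<lambda>_. 0)"
    and fib: "\<And>f. f \<in> Qfun A \<Longrightarrow> (\<forall>x\<in>A. \<forall>x'\<in>A. pa x = pa x' \<longrightarrow> f x = f x')
               \<Longrightarrow> (\<forall>y\<in>B. \<forall>y'\<in>B. pb y = pb y' \<longrightarrow> T f y = T f y')"
  shows "card (pa ` A) \<le> card (pb ` B)"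
proof (rule ccontr)
  assume "\<not> ?thesis"
  then have lt: "card (pb ` B) < card (pa ` A)" by simp
  define rep where "rep k = (SOME y. y \<in> B \<and> pb y = k)" for k
  have rep: "y \<in> B \<Longrightarrow> rep (pb y) \<in> B \<and> pb (rep (pb y)) = pb y" for y
    unfolding rep_def by (rule someI) auto
  define R where "R = rep ` pb ` B"
  have cR: "card R \<le> card (pb ` B)" unfolding R_def by (rule card_image_le) (use fin in auto)
  define e where "e k = (\<lambda>x. if x \<in> A \<and> pa x = k then (1::rat) else 0)" for k
  have eQ: "e k \<in> Qfun A" for k by (auto simp: e_def Qfun_def)
  from elim_lemma[of R "pa ` A" "\<lambda>k. T (e k)"] lt cR fin obtain c where
    c: "\<exists>k\<in>pa ` A. c k \<noteq> 0" "\<forall>s\<in>R. (\<Sum>k\<in>pa ` A. c k * T (e k) s) = 0"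
    unfolding R_def by (auto simp: card_image_le)
  define \<phi> where "\<phi> = (\<lambda>x. \<Sum>k\<in>pa ` A. c k * e k x)"
  have \<phi>Q: "\<phi> \<in> Qfun A" unfolding \<phi>_def using eQ by (intro Qfun_sum Qfun_smul) auto
  have T\<phi>: "T \<phi> = (\<lambda>s. \<Sum>k\<in>pa ` A. c k * T (e k) s)"
  proof -
    have "T \<phi> = (\<lambda>s. \<Sum>k\<in>pa ` A. T (\<lambda>y. c k * e k y) s)"
      unfolding \<phi>_def using eQ fin by (intro qlin_sum[OF lin]) auto
    also have "\<dots> = (\<lambda>s. \<Sum>k\<in>pa ` A. c k * T (e k) s)"
      using qlin_smul[OF lin eQ] by simp
    finally show ?thesis .
  qed
  have \<phi>x: "x \<in> A \<Longrightarrow> \<phi> x = c (pa x)" for x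
    using fin by (simp add: \<phi>_def e_def if_distrib cong: if_cong)
  have \<phi>fib: "\<forall>x\<in>A. \<forall>x'\<in>A. pa x = pa x' \<longrightarrow> \<phi> x = \<phi> x'" using \<phi>x by auto
  have "T \<phi> = (\<lambda>_. 0)"
  proof
    fix s show "T \<phi> s = 0"
    proof (cases "s \<in> B")
      case True
      have "T \<phi> s = T \<phi> (rep (pb s))" using fib[OF \<phi>Q \<phi>fib] rep[OF True] True by metis
      also have "\<dots> = 0" using c(2) True T\<phi> by (simp add: R_def)
      finally show ?thesis .
    next
      case False then show ?thesis using qlin_in[OF lin \<phi>Q] by (simp add: Qfun_def)
    qed
  qed
  then have "\<phi> = (\<lambda>_. 0)" using inj0 \<phi>Q by blast
  then show False using c(1) \<phi>x by auto
qed

definition orbproj :: "('a,'c) monoid_scheme \<Rightarrow> 'a set \<Rightarrow> ('a set \<times> nat \<times> 'a set) \<Rightarrow> ('a set \<times> nat \<times> 'a set)" where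
  "orbproj G C = (\<lambda>(S,j,D). (S, j, D <#>\<^bsub>G\<^esub> C))"

context comm_group
begin

lemma finite_subgroups: "finite (carrier G) \<Longrightarrow> finite {S. subgroup S G}"
  by (rule finite_subset[of _ "Pow (carrier G)"]) (auto dest: subgroup.subset)

lemma finite_lcosets: "finite (carrier G) \<Longrightarrow> finite (lcosets H)"
  unfolding LCOSETS_def by simp

lemma psets_Sigma: "psets G m = Sigma {S. subgroup S G} (\<lambda>S. Sigma {..<m S} (\<lambda>_. lcosets S))"
  by (auto simp: psets_def)

lemma finite_psets: "finite (carrier G) \<Longrightarrow> finite (psets G m)"
  unfolding psets_Sigma using finite_subgroups finite_lcosets by (intro finite_SigmaI) auto

lemma card_psets: "finite (carrier G) \<Longrightarrow>
   card (psets G m) = (\<Sum>S\<in>{S. subgroup S G}. m S * card (lcosets S))"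
  unfolding psets_Sigma using finite_subgroups finite_lcosets
  by (subst card_SigmaI) (auto simp: card_cartesian_product)

lemma lcosets_mem: "D \<in> lcosets H \<longleftrightarrow> (\<exists>a\<in>carrier G. D = a <# H)"
  by (auto simp: LCOSETS_def)

lemma orbproj_image:
  assumes "subgroup C G"
  shows "orbproj G C ` psets G m = Sigma {S. subgroup S G} (\<lambda>S. Sigma {..<m S} (\<lambda>_. lcosets (S <#> C)))"
proof -
  have eq: "subgroup S G \<Longrightarrow> a \<in> carrier G \<Longrightarrow> (a <# S) <#> C = a <# (S <#> C)" for S a
    using assms by (intro setmult_lcos_assoc) (auto dest: subgroup.subset)
  show ?thesis
    unfolding psets_def orbproj_def
    by (auto simp: lcosets_mem eq image_iff) (metis eq)
qed

lemma card_orbproj: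
  assumes "finite (carrier G)" "subgroup C G"
  shows "card (orbproj G C ` psets G m) = (\<Sum>S\<in>{S. subgroup S G}. m S * card (lcosets (S <#> C)))"
  unfolding orbproj_image[OF assms(2)] using finite_subgroups[OF assms(1)] finite_lcosets[OF assms(1)]
  by (subst card_SigmaI) (auto simp: card_cartesian_product)

end

context comm_group
begin

lemma cact_simp: "cact G g (S, j, D) = (S, j, g <# D)"
  by (simp add: cact_def)

lemma cact_mem:
  assumes "g \<in> carrier G" "x \<in> psets G m"
  shows "cact G g x \<in> psets G m"
proof -
  obtain S j a where x: "x = (S, j, a <# S)" "subgroup S G" "j < m S" "a \<in> carrier G"
    using assms(2) by (auto simp: psets_def lcosets_mem)
  have "g <# (a <# S) = (g \<otimes> a) <# S"
    using x assms by (intro lcos_m_assoc) (auto dest: subgroup.subset)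
  then show ?thesis using x assms by (auto simp: psets_def cact_simp lcosets_mem)
qed

lemma lcos_absorb:
  assumes "subgroup H G" "a \<in> carrier G" "h \<in> H"
  shows "(a \<otimes> h) <# H = a <# H"
proof -
  have "a \<otimes> h \<in> a <# H" using assms by (auto simp: l_coset_def)
  then show ?thesis using l_repr_independence[OF _ assms(2,1)] by simp
qed

lemma orbproj_cact:
  assumes C: "subgroup C G" and g: "g \<in> C" and x: "x \<in> psets G m"
  shows "orbproj G C (cact G g x) = orbproj G C x"
proof -
  obtain S j a where xx: "x = (S, j, a <# S)" "subgroup S G" "j < m S" "a \<in> carrier G"
    using x by (auto simp: psets_def lcosets_mem)
  have gc: "g \<in> carrier G" using C g by (auto dest: subgroup.subset)
  have H: "subgroup (S <#> C) G" using mult_subgroups[OF xx(2) C] .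
  have gH: "g \<in> S <#> C"
  proof -
    have "\<one> \<otimes> g \<in> S <#> C" using g subgroup.one_closed[OF xx(2)] unfolding set_mult_def by blast
    then show ?thesis using gc by simp
  qed
  have e1: "g <# (a <# S) = (g \<otimes> a) <# S"
    using xx gc by (intro lcos_m_assoc) (auto dest: subgroup.subset)
  have e2: "b \<in> carrier G \<Longrightarrow> (b <# S) <#> C = b <# (S <#> C)" for b
    using xx C by (intro setmult_lcos_assoc) (auto dest: subgroup.subset)
  have "(g \<otimes> a) <# (S <#> C) = (a \<otimes> g) <# (S <#> C)" using gc xx by (simp add: m_comm)
  also have "\<dots> = a <# (S <#> C)" using lcos_absorb[OF H xx(4) gH] .
  finally show ?thesis using xx gc e1 e2 by (simp add: orbproj_def cact_simp)
qed

lemma orbproj_fiber: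
  assumes C: "subgroup C G" and x: "x \<in> psets G m" and x': "x' \<in> psets G m"
    and eq: "orbproj G C x = orbproj G C x'"
  shows "\<exists>c\<in>C. x' = cact G c x"
proof -
  obtain S j a where xx: "x = (S, j, a <# S)" "subgroup S G" "j < m S" "a \<in> carrier G"
    using x by (auto simp: psets_def lcosets_mem)
  obtain S' j' a' where xx': "x' = (S', j', a' <# S')" "subgroup S' G" "j' < m S'" "a' \<in> carrier G"
    using x' by (auto simp: psets_def lcosets_mem)
  have e2: "b \<in> carrier G \<Longrightarrow> (b <# S) <#> C = b <# (S <#> C)" for b
    using xx C by (intro setmult_lcos_assoc) (auto dest: subgroup.subset)
  have SS: "S' = S" "j' = j" using eq xx xx' by (auto simp: orbproj_def)
  have H: "subgroup (S <#> C) G" using mult_subgroups[OF xx(2) C] .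
  have "a <# (S <#> C) = a' <# (S <#> C)" using eq xx xx' SS e2 by (simp add: orbproj_def)
  moreover have "a' \<in> a' <# (S <#> C)" using H xx'(4) by (auto simp: l_coset_def intro!: bexI[of _ \<one>] subgroup.one_closed)
  ultimately have "a' \<in> a <# (S <#> C)" by simp
  then obtain s c where sc: "s \<in> S" "c \<in> C" "a' = a \<otimes> (s \<otimes> c)"
    by (auto simp: l_coset_def set_mult_def)
  have sc': "s \<in> carrier G" "c \<in> carrier G" using sc xx(2) C by (auto dest: subgroup.subset)
  have "a' = (c \<otimes> a) \<otimes> s" using sc sc' xx(4) by (simp add: m_ac)
  then have "a' <# S = (c \<otimes> a) <# S" using lcos_absorb[OF xx(2) _ sc(1), of "c \<otimes> a"] sc' xx(4) by simp
  also have "\<dots> = c <# (a <# S)" using xx sc' by (intro lcos_m_assoc[symmetric]) (auto dest: subgroup.subset)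
  finally show ?thesis using sc(2) xx xx' SS by (auto simp: cact_simp)
qed

end

lemma rep_iso_sym:
  assumes "rep_iso W a A b B"
  shows "rep_iso W b B a A"
proof -
  obtain T where T: "bij_betw T (Qfun A) (Qfun B)"
    "\<forall>f\<in>Qfun A. \<forall>h\<in>Qfun A. T (\<lambda>x. f x + h x) = (\<lambda>y. T f y + T h y)"
    "\<forall>c. \<forall>f\<in>Qfun A. T (\<lambda>x. c * f x) = (\<lambda>y. c * T f y)"
    "\<forall>g\<in>carrier W. \<forall>f\<in>Qfun A. T (pact W a A g f) = pact W b B g (T f)"
    using assms unfolding rep_iso_def by blast
  define T' where "T' = inv_into (Qfun A) T"
  have bij': "bij_betw T' (Qfun B) (Qfun A)" unfolding T'_def by (rule bij_betw_inv_into[OF T(1)])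
  have TT': "h \<in> Qfun B \<Longrightarrow> T (T' h) = h" for h
    unfolding T'_def using T(1) by (simp add: bij_betw_inv_into_right)
  have T'T: "f \<in> Qfun A \<Longrightarrow> T' (T f) = f" for f
    unfolding T'_def using T(1) by (simp add: bij_betw_inv_into_left)
  have T'Q: "h \<in> Qfun B \<Longrightarrow> T' h \<in> Qfun A" for h using bij' by (auto simp: bij_betw_def)
  have pactQ: "pact W c Z g f \<in> Qfun Z" for c Z g f by (auto simp: pact_def Qfun_def)
  show ?thesis unfolding rep_iso_def
  proof (intro exI[of _ T'] conjI ballI allI)
    show "bij_betw T' (Qfun B) (Qfun A)" by (rule bij')
  next
    fix f h assume fh: "f \<in> Qfun B" "h \<in> Qfun B"
    have e1: "T (\<lambda>x. T' f x + T' h x) = (\<lambda>y. T (T' f) y + T (T' h) y)" using T(2) T'Q fh by blast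
    have "(\<lambda>x. f x + h x) = T (\<lambda>x. T' f x + T' h x)" unfolding e1 using TT' fh by simp
    then have "T' (\<lambda>x. f x + h x) = T' (T (\<lambda>x. T' f x + T' h x))" by (rule arg_cong)
    also have "\<dots> = (\<lambda>x. T' f x + T' h x)" using T'T T'Q fh by (auto intro!: Qfun_add)
    finally show "T' (\<lambda>x. f x + h x) = (\<lambda>y. T' f y + T' h y)" .
  next
    fix c f assume f: "f \<in> Qfun B"
    have e1: "T (\<lambda>x. c * T' f x) = (\<lambda>y. c * T (T' f) y)" using T(3) T'Q f by blast
    have "(\<lambda>x. c * f x) = T (\<lambda>x. c * T' f x)" unfolding e1 using TT' f by simp
    then have "T' (\<lambda>x. c * f x) = T' (T (\<lambda>x. c * T' f x))" by (rule arg_cong)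
    also have "\<dots> = (\<lambda>x. c * T' f x)" using T'T T'Q f by (auto intro!: Qfun_smul)
    finally show "T' (\<lambda>x. c * f x) = (\<lambda>y. c * T' f y)" .
  next
    fix g f assume g: "g \<in> carrier W" and f: "f \<in> Qfun B"
    have "T' (pact W b B g f) = T' (pact W b B g (T (T' f)))" using TT'[OF f] by simp
    also have "\<dots> = T' (T (pact W a A g (T' f)))" using T(4) g T'Q[OF f] by simp
    also have "\<dots> = pact W a A g (T' f)" by (rule T'T[OF pactQ])
    finally show "T' (pact W b B g f) = pact W a A g (T' f)" .
  qed
qed

lemma rep_iso_qlin:
  assumes "rep_iso W a A b B"
  shows "\<exists>T. qlin A B T \<and> (\<forall>f\<in>Qfun A. T f = (\<lambda>_. 0) \<longrightarrow> f = (\<lambda>_. 0))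
            \<and> (\<forall>g\<in>carrier W. \<forall>f\<in>Qfun A. T (pact W a A g f) = pact W b B g (T f))"
proof -
  obtain T where T: "bij_betw T (Qfun A) (Qfun B)"
    "\<forall>f\<in>Qfun A. \<forall>h\<in>Qfun A. T (\<lambda>x. f x + h x) = (\<lambda>y. T f y + T h y)"
    "\<forall>c. \<forall>f\<in>Qfun A. T (\<lambda>x. c * f x) = (\<lambda>y. c * T f y)"
    "\<forall>g\<in>carrier W. \<forall>f\<in>Qfun A. T (pact W a A g f) = pact W b B g (T f)"
    using assms unfolding rep_iso_def by blast
  have lin: "qlin A B T" using T unfolding qlin_def bij_betw_def by auto
  have "T f = (\<lambda>_. 0) \<Longrightarrow> f = (\<lambda>_. 0)" if "f \<in> Qfun A" for f
  proof -
    assume "T f = (\<lambda>_. 0)"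
    then have "T f = T (\<lambda>_. 0)" using qlin_zero[OF lin] by simp
    moreover have "inj_on T (Qfun A)" using T(1) by (simp add: bij_betw_def)
    ultimately show ?thesis using that Qfun_zero unfolding inj_on_def by blast
  qed
  then show ?thesis using lin T(4) by blast
qed

context comm_group
begin

lemma fixed_of_fiber:
  assumes C: "subgroup C G" and g: "g \<in> C" and f: "f \<in> Qfun (psets G m)"
    and fib: "\<forall>x\<in>psets G m. \<forall>x'\<in>psets G m. orbproj G C x = orbproj G C x' \<longrightarrow> f x = f x'"
  shows "pact G (cact G) (psets G m) g f = f"
proof
  fix y
  have ig: "inv g \<in> C" "inv g \<in> carrier G" using C g by (auto intro: subgroup.m_inv_closed dest: subgroup.subset)
  show "pact G (cact G) (psets G m) g f y = f y"
  proof (cases "y \<in> psets G m")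
    case True
    have "pact G (cact G) (psets G m) g f y = f (cact G (inv g) y)" using True by (simp add: pact_def)
    also have "\<dots> = f y" using fib cact_mem[OF ig(2) True] orbproj_cact[OF C ig(1) True] True by blast
    finally show ?thesis .
  next
    case False then show ?thesis using Qfun_out[OF f False] by (simp add: pact_def)
  qed
qed

lemma fiber_of_fixed:
  assumes C: "subgroup C G" and h: "\<forall>g\<in>C. pact G (cact G) (psets G m) g h = h"
  shows "\<forall>y\<in>psets G m. \<forall>y'\<in>psets G m. orbproj G C y = orbproj G C y' \<longrightarrow> h y = h y'"
proof (intro ballI impI)
  fix y y' assume y: "y \<in> psets G m" "y' \<in> psets G m" "orbproj G C y = orbproj G C y'"
  obtain c where c: "c \<in> C" "y' = cact G c y" using orbproj_fiber[OF C y] by blast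
  have cc: "c \<in> carrier G" using C c by (auto dest: subgroup.subset)
  have ic: "inv c \<in> C" using C c by (auto intro: subgroup.m_inv_closed)
  have "h y = pact G (cact G) (psets G m) (inv c) h y" using h ic by metis
  also have "\<dots> = h (cact G (inv (inv c)) y)" using y(1) by (simp add: pact_def)
  also have "\<dots> = h (cact G c y)" using cc by simp
  finally show "h y = h y'" using c by simp
qed

lemma rep_iso_orbit_le:
  assumes fin: "finite (carrier G)" and C: "subgroup C G"
    and R: "rep_iso G (cact G) (psets G m1) (cact G) (psets G m2)"
  shows "card (orbproj G C ` psets G m1) \<le> card (orbproj G C ` psets G m2)"
proof -
  obtain T where T: "qlin (psets G m1) (psets G m2) T"
    "\<forall>f\<in>Qfun (psets G m1). T f = (\<lambda>_. 0) \<longrightarrow> f = (\<lambda>_. 0)"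
    "\<forall>g\<in>carrier G. \<forall>f\<in>Qfun (psets G m1). T (pact G (cact G) (psets G m1) g f) = pact G (cact G) (psets G m2) g (T f)"
    using rep_iso_qlin[OF R] by blast
  show ?thesis
  proof (rule qlin_orbit_le[OF T(1) finite_psets[OF fin] finite_psets[OF fin]])
    show "\<And>f. f \<in> Qfun (psets G m1) \<Longrightarrow> T f = (\<lambda>_. 0) \<Longrightarrow> f = (\<lambda>_. 0)" using T(2) by blast
  next
    fix f assume f: "f \<in> Qfun (psets G m1)"
      and fib: "\<forall>x\<in>psets G m1. \<forall>x'\<in>psets G m1. orbproj G C x = orbproj G C x' \<longrightarrow> f x = f x'"
    have "\<forall>g\<in>C. pact G (cact G) (psets G m2) g (T f) = T f"
    proof
      fix g assume g: "g \<in> C"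
      have gc: "g \<in> carrier G" using C g by (auto dest: subgroup.subset)
      have "pact G (cact G) (psets G m2) g (T f) = T (pact G (cact G) (psets G m1) g f)"
        using T(3) gc f by metis
      also have "\<dots> = T f" using fixed_of_fiber[OF C g f fib] by simp
      finally show "pact G (cact G) (psets G m2) g (T f) = T f" .
    qed
    then show "\<forall>y\<in>psets G m2. \<forall>y'\<in>psets G m2. orbproj G C y = orbproj G C y' \<longrightarrow> T f y = T f y'"
      by (rule fiber_of_fixed[OF C])
  qed
qed

lemma kernel_equation:
  assumes fin: "finite (carrier G)" and C: "subgroup C G" and x: "x \<in> burnside_kernel G"
  shows "(\<Sum>S\<in>{S. subgroup S G}. x S * int (card (lcosets (S <#> C)))) = 0"
proof -
  have R: "rep_iso G (cact G) (psets G (\<lambda>S. nat (x S))) (cact G) (psets G (\<lambda>S. nat (- x S)))"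
    using x by (simp add: burnside_kernel_def)
  note le1 = rep_iso_orbit_le[OF fin C R]
  note le2 = rep_iso_orbit_le[OF fin C rep_iso_sym[OF R]]
  define N where "N S = card (lcosets (S <#> C))" for S
  have "(\<Sum>S\<in>{S. subgroup S G}. nat (x S) * N S)
      = (\<Sum>S\<in>{S. subgroup S G}. nat (- x S) * N S)"
  proof -
    have "card (orbproj G C ` psets G (\<lambda>S. nat (x S))) = card (orbproj G C ` psets G (\<lambda>S. nat (- x S)))"
      using le1 le2 by (rule antisym)
    then show ?thesis unfolding N_def card_orbproj[OF fin C] .
  qed
  then have "(\<Sum>S\<in>{S. subgroup S G}. int (nat (x S)) * int (N S))
      = (\<Sum>S\<in>{S. subgroup S G}. int (nat (- x S)) * int (N S))"
    unfolding of_nat_mult[symmetric] of_nat_sum[symmetric] by (rule arg_cong[where f=int])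
  then have "(\<Sum>S\<in>{S. subgroup S G}. int (nat (x S)) * int (N S) - int (nat (- x S)) * int (N S)) = 0"
    by (simp add: sum_subtractf)
  moreover have "int (nat (x S)) * int (N S) - int (nat (- x S)) * int (N S) = x S * int (N S)" for S
    by (simp add: left_diff_distrib[symmetric])
  ultimately show ?thesis unfolding N_def by simp
qed

end

context comm_group
begin

lemma lcos_one: "a \<in> carrier G \<Longrightarrow> a <# {\<one>} = {a}" by (simp add: l_coset_def)

lemma lcosets_one: "lcosets {\<one>} = (\<lambda>a. {a}) ` carrier G" by (auto simp: LCOSETS_def lcos_one)

lemma inj_lmult: "a \<in> carrier G \<Longrightarrow> H \<subseteq> carrier G \<Longrightarrow> inj_on (\<lambda>l. a \<otimes> l) H"
proof (rule inj_onI)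
  fix x y assume a: "a \<in> carrier G" "H \<subseteq> carrier G" "x \<in> H" "y \<in> H" "a \<otimes> x = a \<otimes> y"
  then have xy: "x \<in> carrier G" "y \<in> carrier G" by auto
  have "inv a \<otimes> (a \<otimes> x) = inv a \<otimes> (a \<otimes> y)" using a by simp
  then show "x = y" using a(1) xy by (simp add: m_assoc[symmetric])
qed

lemma lcos_image: "a <# H = (\<lambda>l. a \<otimes> l) ` H" by (auto simp: l_coset_def)

lemma sum_lcos: "a \<in> carrier G \<Longrightarrow> H \<subseteq> carrier G \<Longrightarrow> (\<Sum>x\<in>a <# H. h x) = (\<Sum>l\<in>H. h (a \<otimes> l))"
  unfolding lcos_image by (subst sum.reindex[OF inj_lmult]) auto

lemma sum_shift:
  assumes P: "subgroup P G" and l: "l \<in> P"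
  shows "(\<Sum>q\<in>P. h (q \<otimes> l)) = (\<Sum>q\<in>P. h q)"
proof -
  have lc: "l \<in> carrier G" using P l by (auto dest: subgroup.subset)
  have "bij_betw (\<lambda>q. q \<otimes> l) P P"
  proof (rule bij_betwI[where g="\<lambda>q. q \<otimes> inv l"])
    show "(\<lambda>q. q \<otimes> l) \<in> P \<rightarrow> P" using P l by (auto intro: subgroup.m_closed)
    show "(\<lambda>q. q \<otimes> inv l) \<in> P \<rightarrow> P" using P l by (auto intro: subgroup.m_closed subgroup.m_inv_closed)
    fix q assume "q \<in> P"
    then have qc: "q \<in> carrier G" using P by (auto dest: subgroup.subset)
    show "q \<otimes> l \<otimes> inv l = q" using qc lc by (simp add: m_assoc)
    show "q \<otimes> inv l \<otimes> l = q" using qc lc by (simp add: m_assoc)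
  qed
  then show ?thesis by (rule sum.reindex_bij_betw)
qed

lemma setmult_sub_absorb:
  assumes "subgroup L G" "subgroup P G" "L \<subseteq> P"
  shows "L <#> P = P"
proof
  show "L <#> P \<subseteq> P" using assms by (auto simp: set_mult_def intro: subgroup.m_closed)
  show "P \<subseteq> L <#> P"
  proof
    fix q assume q: "q \<in> P"
    have "q \<in> carrier G" using subgroup.subset[OF assms(2)] q by blast
    then have "q = \<one> \<otimes> q" by simp
    then show "q \<in> L <#> P" using q subgroup.one_closed[OF assms(1)] unfolding set_mult_def by blast
  qed
qed

end

locale lineconf = comm_group G for G (structure) +
  fixes p :: nat and P :: "'a set" and L :: "nat \<Rightarrow> 'a set"
  assumes fin: "finite (carrier G)"
    and p2: "2 \<le> p"
    and Psub: "subgroup P G" and Pcard: "card P = p * p"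
    and Lsub: "\<And>i. i \<le> p \<Longrightarrow> subgroup (L i) G"
    and Lcard: "\<And>i. i \<le> p \<Longrightarrow> card (L i) = p"
    and LP: "\<And>i. i \<le> p \<Longrightarrow> L i \<subseteq> P"
    and Ldisj: "\<And>i j. i \<le> p \<Longrightarrow> j \<le> p \<Longrightarrow> i \<noteq> j \<Longrightarrow> L i \<inter> L j = {\<one>}"
    and Lunion: "(\<Union>i\<le>p. L i) = P"
begin

definition rr :: "'a set \<Rightarrow> int" where
  "rr S = (if S = {\<one>} then 1 else if S = P then int p else if S \<in> L ` {..p} then -1 else 0)"

lemma pp: "p < p * p"
proof -
  have "p * 2 \<le> p * p" by (rule mult_le_mono2[OF p2])
  then show ?thesis using p2 by linarith
qed

lemma one_ne_P: "{\<one>} \<noteq> P"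
proof
  assume h: "{\<one>} = P" have "card P = 1" by (simp add: h[symmetric])
  then show False using Pcard pp p2 by linarith
qed

lemma L_ne_one: "i \<le> p \<Longrightarrow> L i \<noteq> {\<one>}"
proof
  assume "i \<le> p" "L i = {\<one>}"
  then have "card (L i) = 1" by simp
  then show False using Lcard[OF \<open>i \<le> p\<close>] p2 by linarith
qed

lemma L_ne_P: "i \<le> p \<Longrightarrow> L i \<noteq> P"
proof
  assume "i \<le> p" "L i = P"
  then have "card P = p" using Lcard by metis
  then show False using Pcard pp by linarith
qed

lemma L_inj: "i \<le> p \<Longrightarrow> j \<le> p \<Longrightarrow> L i = L j \<Longrightarrow> i = j"
  using Ldisj L_ne_one by fastforce

lemma L_one: "i \<le> p \<Longrightarrow> \<one> \<in> L i" using Lsub by (auto intro: subgroup.one_closed)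

lemma rr_one: "rr {\<one>} = 1" by (simp add: rr_def)
lemma rr_P: "rr P = int p" using one_ne_P by (simp add: rr_def)
lemma rr_L: "i \<le> p \<Longrightarrow> rr (L i) = -1" using L_ne_one L_ne_P by (auto simp: rr_def)

lemma Xp_iff: "(S, j, D) \<in> psets G (\<lambda>S. nat (rr S)) \<longleftrightarrow>
   (S = {\<one>} \<and> j = 0 \<and> D \<in> lcosets {\<one>}) \<or> (S = P \<and> j < p \<and> D \<in> lcosets P)"
  using one_ne_P triv_subgroup Psub
  by (auto simp: psets_def rr_def split: if_splits)

lemma Xm_iff: "(S, j, D) \<in> psets G (\<lambda>S. nat (- rr S)) \<longleftrightarrow>
   (\<exists>i\<le>p. S = L i) \<and> j = 0 \<and> D \<in> lcosets S"
  using one_ne_P L_ne_one L_ne_P Lsub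
  by (auto simp: psets_def rr_def split: if_splits)

end

context lineconf
begin

abbreviation "Xp \<equiv> psets G (\<lambda>S. nat (rr S))"
abbreviation "Xm \<equiv> psets G (\<lambda>S. nat (- rr S))"

definition TT :: "('a set \<times> nat \<times> 'a set \<Rightarrow> rat) \<Rightarrow> ('a set \<times> nat \<times> 'a set \<Rightarrow> rat)" where
  "TT f = (\<lambda>y. if y \<in> Xm then (case y of (S, j, D) \<Rightarrow>
      (\<Sum>a\<in>D. f ({\<one>}, 0, {a})) + (\<Sum>i\<in>{i. i < p \<and> S = L i}. f (P, i, D <#> P))
      - (if S = L p then (\<Sum>i<p. f (P, i, D <#> P)) else 0)) else 0)"

lemma TT_lin: "qlin Xp Xm TT"
  unfolding qlin_def
proof (intro conjI ballI allI)
  fix f show "TT f \<in> Qfun Xm" by (simp add: Qfun_def TT_def)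
next
  fix f h :: "'a set \<times> nat \<times> 'a set \<Rightarrow> rat"
  show "TT (\<lambda>x. f x + h x) = (\<lambda>y. TT f y + TT h y)"
    by (rule ext) (simp add: TT_def sum.distrib split: prod.split)
next
  fix c :: rat and f :: "'a set \<times> nat \<times> 'a set \<Rightarrow> rat"
  show "TT (\<lambda>x. c * f x) = (\<lambda>y. c * TT f y)"
    by (rule ext) (simp add: TT_def sum_distrib_left algebra_simps split: prod.split)
qed

lemma Lcoset_P: "i \<le> p \<Longrightarrow> b \<in> carrier G \<Longrightarrow> (b <# L i) <#> P = b <# P"
proof -
  assume i: "i \<le> p" and b: "b \<in> carrier G"
  have "(b <# L i) <#> P = b <# (L i <#> P)"
    using Lsub[OF i] Psub b by (intro setmult_lcos_assoc) (auto dest: subgroup.subset)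
  also have "L i <#> P = P" by (rule setmult_sub_absorb[OF Lsub[OF i] Psub LP[OF i]])
  finally show ?thesis .
qed

lemma TT_at:
  assumes i: "i \<le> p" and b: "b \<in> carrier G"
  shows "TT f (L i, 0, b <# L i) = (\<Sum>l\<in>L i. f ({\<one>}, 0, {b \<otimes> l}))
           + (if i < p then f (P, i, b <# P) else - (\<Sum>k<p. f (P, k, b <# P)))"
proof -
  have mem: "(L i, 0, b <# L i) \<in> Xm" using i b by (auto simp: Xm_iff lcosets_mem)
  have s1: "(\<Sum>a\<in>b <# L i. f ({\<one>}, 0, {a})) = (\<Sum>l\<in>L i. f ({\<one>}, 0, {b \<otimes> l}))"
    using b Lsub[OF i] by (intro sum_lcos) (auto dest: subgroup.subset)
  have set: "{k. k < p \<and> L i = L k} = (if i < p then {i} else {})"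
  proof (cases "i < p")
    case True then show ?thesis using L_inj i by auto
  next
    case False
    have "k < p \<Longrightarrow> L i \<noteq> L k" for k using L_inj[of i k] i False by auto
    then show ?thesis using False by auto
  qed
  show ?thesis
    using mem s1 set Lcoset_P[OF i b] L_inj[OF i, of p] i
    by (auto simp: TT_def)
qed

lemma Lfin: "i \<le> p \<Longrightarrow> finite (L i)"
  using Lcard p2 card.infinite by fastforce

lemma Pfin: "finite P" using Pcard p2 card.infinite by fastforce

lemma line_union_sum:
  fixes h :: "'a \<Rightarrow> rat"
  shows "(\<Sum>i\<le>p. \<Sum>l\<in>L i. h l) = of_nat p * h \<one> + (\<Sum>l\<in>P. h l)"
proof -
  have one: "\<one> \<in> P" using Psub by (rule subgroup.one_closed)
  have "(\<Sum>i\<le>p. \<Sum>l\<in>L i. h l) = (\<Sum>i\<le>p. h \<one> + (\<Sum>l\<in>L i - {\<one>}. h l))"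
    using Lfin L_one by (intro sum.cong refl) (simp add: sum.remove)
  also have "\<dots> = of_nat (Suc p) * h \<one> + (\<Sum>i\<le>p. \<Sum>l\<in>L i - {\<one>}. h l)"
    by (simp add: sum.distrib)
  also have "(\<Sum>i\<le>p. \<Sum>l\<in>L i - {\<one>}. h l) = (\<Sum>l\<in>(\<Union>i\<le>p. L i - {\<one>}). h l)"
  proof (rule sum.UNION_disjoint[symmetric])
    show "finite {..p}" by simp
    show "\<forall>i\<in>{..p}. finite (L i - {\<one>})" using Lfin by auto
    show "\<forall>i\<in>{..p}. \<forall>j\<in>{..p}. i \<noteq> j \<longrightarrow> (L i - {\<one>}) \<inter> (L j - {\<one>}) = {}"
      using Ldisj by fastforce
  qed
  also have "(\<Union>i\<le>p. L i - {\<one>}) = P - {\<one>}" using Lunion by blast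
  also have "(\<Sum>l\<in>P - {\<one>}. h l) = (\<Sum>l\<in>P. h l) - h \<one>"
    using Pfin one by (simp add: sum_diff1)
  finally show ?thesis by (simp add: algebra_simps)
qed

lemma TT_inj0:
  assumes f: "f \<in> Qfun Xp" and T0: "TT f = (\<lambda>_. 0)"
  shows "f = (\<lambda>_. 0)"
proof -
  define g where "g a = f ({\<one>}, 0, {a})" for a
  define t where "t i E = f (P, i, E)" for i E
  have A: "(\<Sum>l\<in>L i. g (b \<otimes> l)) + (if i < p then t i (b <# P) else - (\<Sum>k<p. t k (b <# P))) = 0"
    if "i \<le> p" "b \<in> carrier G" for i b
  proof -
    have e: "TT f (L i, 0, b <# L i) = 0" using T0 by simp
    show ?thesis unfolding g_def t_def by (rule trans[OF sym[OF TT_at[OF that, of f]] e])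
  qed
  define Gs where "Gs b = (\<Sum>q\<in>P. g (b \<otimes> q))" for b
  have Pc: "q \<in> P \<Longrightarrow> q \<in> carrier G" for q using Psub by (auto dest: subgroup.subset)
  have Lc: "i \<le> p \<Longrightarrow> l \<in> L i \<Longrightarrow> l \<in> P" for i l using LP by auto
  have shiftP: "b \<in> carrier G \<Longrightarrow> q \<in> P \<Longrightarrow> (b \<otimes> q) <# P = b <# P" for b q
    using lcos_absorb[OF Psub] by simp
  have B: "of_nat p * Gs b + of_nat (p * p) * (if i < p then t i (b <# P) else - (\<Sum>k<p. t k (b <# P))) = 0"
    if i: "i \<le> p" and b: "b \<in> carrier G" for i b
  proof -
    define c where "c = (if i < p then t i (b <# P) else - (\<Sum>k<p. t k (b <# P)))"
    have "0 = (\<Sum>q\<in>P. (\<Sum>l\<in>L i. g ((b \<otimes> q) \<otimes> l)) + (if i < p then t i ((b \<otimes> q) <# P) else - (\<Sum>k<p. t k ((b \<otimes> q) <# P))))"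
      using A[OF i] b Pc by (simp add: sum.neutral)
    also have "\<dots> = (\<Sum>q\<in>P. (\<Sum>l\<in>L i. g (b \<otimes> (q \<otimes> l))) + c)"
      using shiftP b Pc Lc[OF i] by (intro sum.cong refl) (simp add: c_def m_assoc)
    also have "\<dots> = (\<Sum>l\<in>L i. \<Sum>q\<in>P. g (b \<otimes> (q \<otimes> l))) + of_nat (card P) * c"
      by (simp add: sum.distrib sum.swap[of _ P])
    also have "(\<Sum>l\<in>L i. \<Sum>q\<in>P. g (b \<otimes> (q \<otimes> l))) = (\<Sum>l\<in>L i. Gs b)"
      unfolding Gs_def using Lc[OF i] by (intro sum.cong refl sum_shift[OF Psub, of _ "\<lambda>q. g (b \<otimes> q)"]) auto
    also have "\<dots> = of_nat p * Gs b" using Lcard[OF i] by simp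
    finally show ?thesis using Pcard by (simp add: c_def)
  qed
  have Gs0: "Gs b = 0" if b: "b \<in> carrier G" for b
  proof -
    have Bi: "of_nat (p * p) * t i (b <# P) = - (of_nat p * Gs b)" if "i < p" for i
      using B[of i b] b that by (simp add: algebra_simps)
    have Bp: "of_nat p * Gs b - of_nat (p * p) * (\<Sum>k<p. t k (b <# P)) = 0"
      using B[of p b] b by simp
    have "of_nat (p * p) * (\<Sum>k<p. t k (b <# P)) = (\<Sum>k<p. of_nat (p * p) * t k (b <# P))"
      by (simp add: sum_distrib_left)
    also have "\<dots> = (\<Sum>k<p. - (of_nat p * Gs b))" using Bi by simp
    also have "\<dots> = - (of_nat p * (of_nat p * Gs b))" by simp
    finally have "of_nat p * Gs b + of_nat p * (of_nat p * Gs b) = (0::rat)" using Bp by simp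
    then have "(of_nat p + of_nat p * of_nat p) * Gs b = (0::rat)" by (simp add: algebra_simps)
    moreover have "(of_nat p + of_nat p * of_nat p :: rat) \<noteq> 0" using p2
      by (metis add_pos_pos mult_pos_pos of_nat_0_less_iff order_less_le_trans pos2 less_numeral_extra(3))
    ultimately show ?thesis by simp
  qed
  have t0: "t i (b <# P) = 0" if "i < p" "b \<in> carrier G" for i b
    using B[of i b] Gs0[of b] that p2 by simp
  have g0: "g b = 0" if b: "b \<in> carrier G" for b
  proof -
    have Li: "(\<Sum>l\<in>L i. g (b \<otimes> l)) = 0" if "i \<le> p" for i
      using A[OF that b] t0 b by (simp split: if_splits)
    have "(\<Sum>i\<le>p. \<Sum>l\<in>L i. g (b \<otimes> l)) = of_nat p * g (b \<otimes> \<one>) + Gs b"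
      unfolding Gs_def by (rule line_union_sum)
    then have "of_nat p * g b = 0" using Li Gs0[OF b] b by simp
    then show ?thesis using p2 by simp
  qed
  show ?thesis
  proof
    fix x show "f x = 0"
    proof (cases "x \<in> Xp")
      case True
      obtain S j D where x: "x = (S, j, D)" by (cases x)
      show ?thesis
      proof (cases "S = {\<one>}")
        case True
        then obtain a where "a \<in> carrier G" "D = {a}" "j = 0"
          using \<open>x \<in> Xp\<close> x one_ne_P by (auto simp: Xp_iff lcosets_one)
        then show ?thesis using g0 x True by (simp add: g_def)
      next
        case False
        then obtain b where "b \<in> carrier G" "D = b <# P" "j < p" "S = P"
          using \<open>x \<in> Xp\<close> x by (auto simp: Xp_iff lcosets_mem)
        then show ?thesis using t0 x by (simp add: t_def)
      qed
    next
      case False show ?thesis by (rule Qfun_out[OF f False])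
    qed
  qed
qed

lemma pact_one:
  assumes g: "g \<in> carrier G" and a: "a \<in> carrier G"
  shows "pact G (cact G) Xp g f ({\<one>}, 0, {a}) = f ({\<one>}, 0, {inv g \<otimes> a})"
proof -
  have "({\<one>}, 0, {a}) \<in> Xp" using a by (simp add: Xp_iff lcosets_one)
  then show ?thesis using g a by (simp add: pact_def cact_simp l_coset_def)
qed

lemma pact_P:
  assumes g: "g \<in> carrier G" and b: "b \<in> carrier G" and k: "k < p"
  shows "pact G (cact G) Xp g f (P, k, b <# P) = f (P, k, (inv g \<otimes> b) <# P)"
proof -
  have "(P, k, b <# P) \<in> Xp" using b k by (auto simp: Xp_iff lcosets_mem)
  moreover have "inv g <# (b <# P) = (inv g \<otimes> b) <# P"
    using g b Psub by (intro lcos_m_assoc) (auto dest: subgroup.subset)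
  ultimately show ?thesis by (simp add: pact_def cact_simp)
qed

lemma TT_equiv:
  assumes g: "g \<in> carrier G"
  shows "TT (pact G (cact G) Xp g f) = pact G (cact G) Xm g (TT f)"
proof
  fix y
  show "TT (pact G (cact G) Xp g f) y = pact G (cact G) Xm g (TT f) y"
  proof (cases "y \<in> Xm")
    case True
    then obtain i b where y: "y = (L i, 0, b <# L i)" "i \<le> p" "b \<in> carrier G"
      by (cases y) (auto simp: Xm_iff lcosets_mem)
    have ig: "inv g \<in> carrier G" using g by simp
    have igb: "inv g \<otimes> b \<in> carrier G" using g y by simp
    have c: "cact G (inv g) y = (L i, 0, (inv g \<otimes> b) <# L i)"
      using y g Lsub[OF y(2)] by (simp add: cact_simp lcos_m_assoc subgroup.subset)
    have Lc: "l \<in> L i \<Longrightarrow> l \<in> carrier G" for l using Lsub[OF y(2)] by (auto dest: subgroup.subset)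
    have "pact G (cact G) Xm g (TT f) y = TT f (L i, 0, (inv g \<otimes> b) <# L i)"
      using True c by (simp add: pact_def)
    also have "\<dots> = (\<Sum>l\<in>L i. f ({\<one>}, 0, {inv g \<otimes> b \<otimes> l}))
           + (if i < p then f (P, i, (inv g \<otimes> b) <# P) else - (\<Sum>k<p. f (P, k, (inv g \<otimes> b) <# P)))"
      by (rule TT_at[OF y(2) igb])
    also have "\<dots> = TT (pact G (cact G) Xp g f) y"
      unfolding y(1) TT_at[OF y(2) y(3)]
      using pact_one[OF g] pact_P[OF g y(3)] Lc y(3) g by (simp add: m_assoc)
    finally show ?thesis by simp
  next
    case False then show ?thesis by (simp add: TT_def pact_def)
  qed
qed

lemma card_Xp_Xm: "card Xm \<le> card Xp"
proof -
  define n where "n = order G"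
  have lag: "subgroup S G \<Longrightarrow> card (lcosets S) * card S = n" for S
    unfolding n_def using fin by (rule l_lagrange)
  define k where "k = card (lcosets P)"
  have nP: "n = k * (p * p)" using lag[OF Psub] Pcard k_def by simp
  have n1: "card (lcosets {\<one>}) = n" using lag[OF triv_subgroup] by simp
  have nL: "i \<le> p \<Longrightarrow> card (lcosets (L i)) = k * p" for i
  proof -
    assume i: "i \<le> p"
    have "card (lcosets (L i)) * p = (k * p) * p" using lag[OF Lsub[OF i]] Lcard[OF i] nP
      by (simp add: algebra_simps)
    then show ?thesis using p2 by simp
  qed
  have fS: "finite {S. subgroup S G}" using finite_subgroups[OF fin] .
  have "card Xp = (\<Sum>S\<in>{S. subgroup S G}. nat (rr S) * card (lcosets S))"
    using card_psets[OF fin] .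
  also have "\<dots> = (\<Sum>S\<in>{{\<one>}, P}. nat (rr S) * card (lcosets S))"
  proof (rule sum.mono_neutral_right[OF fS])
    show "{{\<one>}, P} \<subseteq> {S. subgroup S G}" using triv_subgroup Psub by auto
    show "\<forall>S\<in>{S. subgroup S G} - {{\<one>}, P}. nat (rr S) * card (lcosets S) = 0"
      by (auto simp: rr_def)
  qed
  also have "\<dots> = n + p * (k)" using one_ne_P n1 rr_one rr_P k_def by simp
  finally have cXp: "card Xp = n + p * k" .
  have "card Xm = (\<Sum>S\<in>{S. subgroup S G}. nat (- rr S) * card (lcosets S))"
    using card_psets[OF fin] .
  also have "\<dots> = (\<Sum>S\<in>L ` {..p}. nat (- rr S) * card (lcosets S))"
  proof (rule sum.mono_neutral_right[OF fS])
    show "L ` {..p} \<subseteq> {S. subgroup S G}" using Lsub by auto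
    show "\<forall>S\<in>{S. subgroup S G} - L ` {..p}. nat (- rr S) * card (lcosets S) = 0"
      using p2 by (auto simp: rr_def)
  qed
  also have "\<dots> = (\<Sum>i\<le>p. nat (- rr (L i)) * card (lcosets (L i)))"
    using L_inj by (subst sum.reindex) (auto simp: inj_on_def)
  also have "\<dots> = (\<Sum>i\<le>p. k * p)" using rr_L nL by simp
  finally have "card Xm = Suc p * (k * p)" by simp
  then show ?thesis using cXp nP by (simp add: algebra_simps)
qed

lemma rr_kernel: "rr \<in> burnside_kernel G"
proof -
  have "rr \<in> burnside G"
    using triv_subgroup Psub Lsub by (auto simp: burnside_def rr_def split: if_splits)
  moreover have "rep_iso G (cact G) Xp (cact G) Xm"
    unfolding rep_iso_def
  proof (intro exI[of _ TT] conjI ballI allI)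
    show "bij_betw TT (Qfun Xp) (Qfun Xm)"
      by (rule qlin_surj[OF TT_lin finite_psets[OF fin] finite_psets[OF fin] card_Xp_Xm TT_inj0])
  next
    fix f h assume "f \<in> Qfun Xp" "h \<in> Qfun Xp"
    then show "TT (\<lambda>x. f x + h x) = (\<lambda>y. TT f y + TT h y)" using TT_lin by (simp add: qlin_add)
  next
    fix c f assume "f \<in> Qfun Xp"
    then show "TT (\<lambda>x. c * f x) = (\<lambda>y. c * TT f y)" using TT_lin by (simp add: qlin_smul)
  next
    fix g f assume "g \<in> carrier G" "f \<in> Qfun Xp"
    then show "TT (pact G (cact G) Xp g f) = pact G (cact G) Xm g (TT f)" by (simp add: TT_equiv)
  qed
  ultimately show ?thesis by (simp add: burnside_kernel_def)
qed

end

locale pcube = comm_group G for G (structure) +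
  fixes p :: nat
  assumes fin: "finite (carrier G)" and pp: "Factorial_Ring.prime p" and ord: "order G = p ^ 3"
begin

lemma p2: "2 \<le> p" using pp by (simp add: prime_ge_2_nat)

lemma lag: "subgroup H G \<Longrightarrow> card (lcosets H) * card H = p ^ 3"
  using l_lagrange[OF fin] ord by simp

lemma sub_pow: "subgroup H G \<Longrightarrow> \<exists>i\<le>3. card H = p ^ i"
proof -
  assume H: "subgroup H G"
  have "p ^ 3 = card (lcosets H) * card H" using lag[OF H] by simp
  then have "card H dvd p ^ 3" by (simp add: dvd_triv_right)
  then show ?thesis using divides_primepow_nat[OF pp, of "card H" 3] by blast
qed

lemma card1_triv: "subgroup H G \<Longrightarrow> card H = 1 \<Longrightarrow> H = {\<one>}"
proof -
  assume H: "subgroup H G" "card H = 1"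
  then obtain x where x: "H = {x}" by (auto simp: card_1_singleton_iff)
  have "\<one> \<in> H" using H(1) by (rule subgroup.one_closed)
  then show ?thesis using x by simp
qed

lemma card_carrier: "card (carrier G) = p ^ 3" using ord by (simp add: order_def)

lemma subfin: "subgroup H G \<Longrightarrow> finite H"
  using fin by (auto dest: subgroup.subset intro: finite_subset)

lemma twoline:
  assumes S: "subgroup S G" and C: "subgroup C G" and cS: "card S = p" and cC: "card C = p"
    and ne: "S \<noteq> C"
  shows "card (S <#> C) = p * p"
proof -
  have H: "subgroup (S <#> C) G" by (rule mult_subgroups[OF S C])
  have CH: "C \<subseteq> S <#> C"
  proof
    fix c assume c: "c \<in> C"
    have "c \<in> carrier G" using subgroup.subset[OF C] c by blast
    then have "c = \<one> \<otimes> c" by simp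
    then show "c \<in> S <#> C" using c subgroup.one_closed[OF S] unfolding set_mult_def by blast
  qed
  have SH: "S \<subseteq> S <#> C"
  proof
    fix s assume s: "s \<in> S"
    have "s \<in> carrier G" using subgroup.subset[OF S] s by blast
    then have "s = s \<otimes> \<one>" by simp
    then show "s \<in> S <#> C" using s subgroup.one_closed[OF C] unfolding set_mult_def by blast
  qed
  have "\<not> S \<subseteq> C"
  proof
    assume "S \<subseteq> C"
    then have "S = C" using card_subset_eq[OF subfin[OF C]] cS cC by simp
    then show False using ne by simp
  qed
  then have "C \<noteq> S <#> C" using SH by blast
  then have "C \<subset> S <#> C" using CH by blast
  then have "card C < card (S <#> C)" by (rule psubset_card_mono[OF subfin[OF H]])
  then have lt: "p < card (S <#> C)" using cC by simp
  have "S <#> C = (\<lambda>(s, c). s \<otimes> c) ` (S \<times> C)" by (auto simp: set_mult_def)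
  then have le: "card (S <#> C) \<le> p * p"
    using card_image_le[of "S \<times> C" "\<lambda>(s, c). s \<otimes> c"] subfin[OF S] subfin[OF C] cS cC
    by (simp add: card_cartesian_product)
  obtain i where i: "i \<le> 3" "card (S <#> C) = p ^ i" using sub_pow[OF H] by blast
  have pp3: "p * p < p ^ 3"
  proof -
    have "p * p * 1 < p * p * p" using p2 by (intro mult_strict_left_mono) auto
    then show ?thesis by (simp add: power3_eq_cube)
  qed
  have "i \<noteq> 0" proof assume "i = 0" then show False using lt i p2 by simp qed
  moreover have "i \<noteq> 1" proof assume "i = 1" then show False using lt i by simp qed
  moreover have "i \<noteq> 3" proof assume "i = 3" then show False using le i pp3 by simp qed
  ultimately have "i = 2" using i by linarith
  then show ?thesis using i by (simp add: power2_eq_square)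
qed

lemma N_carrier: "subgroup S G \<Longrightarrow> card (lcosets (S <#> carrier G)) = 1"
proof -
  assume S: "subgroup S G"
  have "S <#> carrier G = carrier G"
    by (rule setmult_sub_absorb[OF S subgroup_self subgroup.subset[OF S]])
  then show ?thesis using lag[OF subgroup_self] card_carrier p2 by simp
qed

lemma N_line:
  assumes S: "subgroup S G" and C: "subgroup C G" and cC: "card C = p"
    and cS: "card S = 1 \<or> card S = p"
  shows "int (card (lcosets (S <#> C))) = int p + (if S = {\<one>} \<or> S = C then int p * int p - int p else 0)"
proof -
  have pos: "0 < p" using p2 by simp
  show ?thesis
  proof (cases "S = {\<one>} \<or> S = C")
    case True
    then have "S <#> C = C"
      using setmult_sub_absorb[OF triv_subgroup C] subgroup.one_closed[OF C] subgroup_mult_id[OF C] by auto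
    then have "card (lcosets (S <#> C)) * p = p * p * p" using lag[OF C] cC by (simp add: power3_eq_cube)
    then have "card (lcosets (S <#> C)) = p * p" using pos by simp
    then show ?thesis using True by simp
  next
    case False
    then have cS': "card S = p" using cS card1_triv[OF S] by auto
    have "card (lcosets (S <#> C)) * (p * p) = p * p * p"
      using lag[OF mult_subgroups[OF S C]] twoline[OF S C cS' cC] False by (simp add: power3_eq_cube)
    then have "card (lcosets (S <#> C)) = p" using pos by simp
    then show ?thesis using False by simp
  qed
qed

lemma ub_zero:
  fixes y :: "'a set \<Rightarrow> int"
  assumes supp: "\<And>S. y S \<noteq> 0 \<Longrightarrow> subgroup S G \<and> (card S = 1 \<or> card S = p)"
    and z: "subgroup Z G" "card Z = p" "y Z = 0"
    and eqs: "\<And>C. subgroup C G \<Longrightarrow> (C = carrier G \<or> card C = p) \<Longrightarrow>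
               (\<Sum>S\<in>{S. subgroup S G}. y S * int (card (lcosets (S <#> C)))) = 0"
  shows "y = (\<lambda>_. 0)"
proof -
  have fS: "finite {S. subgroup S G}" by (rule finite_subgroups[OF fin])
  have EW: "(\<Sum>S\<in>{S. subgroup S G}. y S) = 0"
    using eqs[OF subgroup_self] N_carrier by simp
  have EC: "y {\<one>} + y C = 0" if C: "subgroup C G" "card C = p" for C
  proof -
    have C1: "C \<noteq> {\<one>}" using C p2 by auto
    have pt: "y S * int (card (lcosets (S <#> C))) =
          int p * y S + (int p * int p - int p) * ((if S = {\<one>} then y S else 0) + (if S = C then y S else 0))"
      if "S \<in> {S. subgroup S G}" for S
    proof (cases "y S = 0")
      case True then show ?thesis by auto
    next
      case False
      then have "card S = 1 \<or> card S = p" using supp by blast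
      then have N: "int (card (lcosets (S <#> C))) = int p + (if S = {\<one>} \<or> S = C then int p * int p - int p else 0)"
        using N_line[of S C] that C by auto
      show ?thesis unfolding N using C1
        by (cases "S = {\<one>}"; cases "S = C") (simp_all add: algebra_simps)
    qed
    have "0 = (\<Sum>S\<in>{S. subgroup S G}. y S * int (card (lcosets (S <#> C))))"
      using eqs[OF C(1)] C(2) by simp
    also have "\<dots> = (\<Sum>S\<in>{S. subgroup S G}. int p * y S + (int p * int p - int p) * ((if S = {\<one>} then y S else 0) + (if S = C then y S else 0)))"
      using pt by (rule sum.cong[OF refl])
    also have "\<dots> = int p * (\<Sum>S\<in>{S. subgroup S G}. y S) + (int p * int p - int p) *
        ((\<Sum>S\<in>{S. subgroup S G}. if S = {\<one>} then y S else 0) + (\<Sum>S\<in>{S. subgroup S G}. if S = C then y S else 0))"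
      by (simp only: sum.distrib sum_distrib_left[symmetric])
    also have "(\<Sum>S\<in>{S. subgroup S G}. if S = {\<one>} then y S else 0) = y {\<one>}"
      using fS triv_subgroup by (simp add: sum.delta)
    also have "(\<Sum>S\<in>{S. subgroup S G}. if S = C then y S else 0) = y C"
      using fS C(1) by (simp add: sum.delta)
    finally have "(int p * int p - int p) * (y {\<one>} + y C) = 0" using EW by simp
    moreover have "int p * int p - int p \<noteq> 0"
    proof -
      have "int p * 2 \<le> int p * int p" using p2 by (intro mult_left_mono) auto
      then show ?thesis using p2 by linarith
    qed
    ultimately show ?thesis by simp
  qed
  have y1: "y {\<one>} = 0" using EC[OF z(1,2)] z(3) by simp
  show ?thesis
  proof
    fix S show "y S = 0"
    proof (rule ccontr)
      assume ne: "y S \<noteq> 0"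
      then have S: "subgroup S G" "card S = 1 \<or> card S = p" using supp by auto
      show False
      proof (cases "card S = 1")
        case True then show False using card1_triv[OF S(1)] y1 ne by simp
      next
        case False then show False using EC[OF S(1)] S y1 ne by simp
      qed
    qed
  qed
qed

end

lemma DirProd_comm_group:
  assumes "comm_group A" "comm_group B"
  shows "comm_group (A \<times>\<times> B)"
proof -
  interpret A: comm_group A by fact
  interpret B: comm_group B by fact
  have "group (A \<times>\<times> B)" by (rule DirProd_group) (unfold_locales)
  then show ?thesis
    by (rule group.group_comm_groupI) (auto simp: A.m_comm B.m_comm)
qed

lemma DirProd_pow:
  "(x, y) [^]\<^bsub>A \<times>\<times> B\<^esub> (n::nat) = (x [^]\<^bsub>A\<^esub> n, y [^]\<^bsub>B\<^esub> n)"
  by (induction n) auto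

lemma graph_mem: "(k, h) \<in> hom_graph K \<rho> \<longleftrightarrow> k \<in> K \<and> h = \<rho> k"
  by (auto simp: hom_graph_def)

lemma graph_card: "card (hom_graph K \<rho>) = card K"
  unfolding hom_graph_def by (rule card_image) (auto simp: inj_on_def)

lemma graph_subgroup:
  assumes G: "group G" and H: "group H" and K: "subgroup K G"
    and rho: "\<rho> \<in> hom (G\<lparr>carrier := K\<rparr>) H"
  shows "subgroup (hom_graph K \<rho>) (G \<times>\<times> H)"
proof -
  interpret G: group G by fact
  interpret H: group H by fact
  interpret GH: group "G \<times>\<times> H" by (rule DirProd_group[OF G H])
  have GK: "group (G\<lparr>carrier := K\<rparr>)" by (rule G.subgroup_imp_group[OF K])
  interpret h: group_hom "G\<lparr>carrier := K\<rparr>" H \<rho>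
    using GK H rho by (simp add: group_hom_def group_hom_axioms_def)
  have Kc: "k \<in> K \<Longrightarrow> k \<in> carrier G" for k using K by (auto dest: subgroup.subset)
  have rc: "k \<in> K \<Longrightarrow> \<rho> k \<in> carrier H" for k using h.hom_closed by simp
  show ?thesis
  proof (rule GH.subgroupI)
    show "hom_graph K \<rho> \<subseteq> carrier (G \<times>\<times> H)" using Kc rc by (auto simp: hom_graph_def)
    show "hom_graph K \<rho> \<noteq> {}" using subgroup.one_closed[OF K] by (auto simp: hom_graph_def)
  next
    fix a assume "a \<in> hom_graph K \<rho>"
    then obtain k where k: "k \<in> K" "a = (k, \<rho> k)" by (auto simp: hom_graph_def)
    have "inv\<^bsub>G \<times>\<times> H\<^esub> a = (inv\<^bsub>G\<^esub> k, inv\<^bsub>H\<^esub> \<rho> k)"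
      using k Kc rc G H by simp
    also have "inv\<^bsub>H\<^esub> \<rho> k = \<rho> (inv\<^bsub>G\<lparr>carrier := K\<rparr>\<^esub> k)" using h.hom_inv k by simp
    also have "inv\<^bsub>G\<lparr>carrier := K\<rparr>\<^esub> k = inv\<^bsub>G\<^esub> k" using G.m_inv_consistent[OF K k(1)] .
    finally show "inv\<^bsub>G \<times>\<times> H\<^esub> a \<in> hom_graph K \<rho>"
      using subgroup.m_inv_closed[OF K k(1)] by (auto simp: hom_graph_def)
  next
    fix a b assume "a \<in> hom_graph K \<rho>" "b \<in> hom_graph K \<rho>"
    then obtain k k' where k: "k \<in> K" "a = (k, \<rho> k)" "k' \<in> K" "b = (k', \<rho> k')" by (auto simp: hom_graph_def)
    have "\<rho> (k \<otimes>\<^bsub>G\<lparr>carrier := K\<rparr>\<^esub> k') = \<rho> k \<otimes>\<^bsub>H\<^esub> \<rho> k'" using h.hom_mult k by simp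
    then have "\<rho> (k \<otimes>\<^bsub>G\<^esub> k') = \<rho> k \<otimes>\<^bsub>H\<^esub> \<rho> k'" by simp
    then show "a \<otimes>\<^bsub>G \<times>\<times> H\<^esub> b \<in> hom_graph K \<rho>"
      using k subgroup.m_closed[OF K k(1) k(3)] by (auto simp: hom_graph_def)
  qed
qed

lemma is_graph_props:
  assumes G: "group G" and H: "group H" and L: "is_graph G H L"
  shows "\<exists>K. subgroup K G \<and> subgroup L (G \<times>\<times> H) \<and> card L = card K"
  using L graph_subgroup[OF G H] graph_card unfolding is_graph_def by metis

lemma Cyc_carrier: "p \<noteq> 0 \<Longrightarrow> carrier (Cyc p) = {0..<int p}"
  by (simp add: carrier_integer_mod_group)

lemma Cyc_comm: "comm_group (Cyc p)" by simp
lemma G2_comm: "comm_group (Cyc p \<times>\<times> Cyc p)" by (rule DirProd_comm_group) simp_all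
lemma W_comm: "comm_group ((Cyc p \<times>\<times> Cyc p) \<times>\<times> Cyc p)" by (rule DirProd_comm_group[OF G2_comm]) simp

lemma Cyc_card: "p \<noteq> 0 \<Longrightarrow> card (carrier (Cyc p)) = p" by (simp add: Cyc_carrier)

lemma W_fin: "p \<noteq> 0 \<Longrightarrow> finite (carrier ((Cyc p \<times>\<times> Cyc p) \<times>\<times> Cyc p))"
  by (simp add: Cyc_carrier)

lemma W_order: "p \<noteq> 0 \<Longrightarrow> order ((Cyc p \<times>\<times> Cyc p) \<times>\<times> Cyc p) = p ^ 3"
  by (simp add: order_def Cyc_carrier card_cartesian_product power3_eq_cube)

lemma G2_card: "p \<noteq> 0 \<Longrightarrow> card (carrier (Cyc p \<times>\<times> Cyc p)) = p * p"
  by (simp add: Cyc_carrier card_cartesian_product)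

lemma W_pcube: "Factorial_Ring.prime p \<Longrightarrow> pcube ((Cyc p \<times>\<times> Cyc p) \<times>\<times> Cyc p) p"
  unfolding pcube_def pcube_axioms_def using W_comm W_fin W_order
  by (metis not_prime_0)

lemma modmul_inj:
  fixes q a i j :: int
  assumes q: "Factorial_Ring.prime q" and a: "0 < a" "a < q" and i: "0 \<le> i" "i < q" and j: "0 \<le> j" "j < q"
    and eq: "(a * i) mod q = (a * j) mod q"
  shows "i = j"
proof -
  have "q dvd a * i - a * j" using eq by (simp add: mod_eq_dvd_iff)
  then have "q dvd a * (i - j)" by (simp add: right_diff_distrib)
  then have "q dvd a \<or> q dvd (i - j)" using q by (simp add: prime_dvd_mult_iff)
  moreover have "\<not> q dvd a" using a zdvd_not_zless by blast
  ultimately have d: "q dvd (i - j)" by blast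
  show ?thesis
  proof (rule ccontr)
    assume "i \<noteq> j"
    then have "\<bar>q\<bar> \<le> \<bar>i - j\<bar>" using dvd_imp_le_int d by simp
    then show False using i j by linarith
  qed
qed

lemma modmul_surj:
  fixes q a b :: int
  assumes q: "Factorial_Ring.prime q" and a: "0 < a" "a < q" and b: "0 \<le> b" "b < q"
  shows "\<exists>i. 0 \<le> i \<and> i < q \<and> (a * i) mod q = b"
proof -
  let ?f = "\<lambda>i. (a * i) mod q"
  have q0: "0 < q" using a by simp
  have inj: "inj_on ?f {0..<q}"
  proof (rule inj_onI)
    fix x y assume xy: "x \<in> {0..<q}" "y \<in> {0..<q}" "?f x = ?f y"
    then show "x = y" using modmul_inj[OF q a, of x y] by simp
  qed
  have sub: "?f ` {0..<q} \<subseteq> {0..<q}"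
  proof
    fix x assume "x \<in> ?f ` {0..<q}"
    then obtain i where "x = ?f i" by blast
    then show "x \<in> {0..<q}" using q0 pos_mod_sign[OF q0, of "a * i"] pos_mod_bound[OF q0, of "a * i"] by simp
  qed
  have "?f ` {0..<q} = {0..<q}" by (rule endo_inj_surj[OF _ sub inj]) simp
  then have "b \<in> ?f ` {0..<q}" using b by simp
  then obtain i where "i \<in> {0..<q}" "b = ?f i" by blast
  then show ?thesis by auto
qed

lemma mod_lin: "((x::int) mod n * u + y mod n * v) mod n = (x * u + y * v) mod n"
proof -
  have "(x mod n * u + y mod n * v) mod n = ((x mod n * u) mod n + (y mod n * v) mod n) mod n"
    by (rule mod_add_eq[symmetric])
  also have "\<dots> = ((x * u) mod n + (y * v) mod n) mod n" by (simp only: mod_mult_left_eq)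
  also have "\<dots> = (x * u + y * v) mod n" by (rule mod_add_eq)
  finally show ?thesis .
qed

lemma hom_restr: "h \<in> hom G H \<Longrightarrow> K \<subseteq> carrier G \<Longrightarrow> h \<in> hom (G\<lparr>carrier := K\<rparr>) H"
  unfolding hom_def by (auto simp: Pi_def subset_iff)

definition rho :: "nat \<Rightarrow> int \<Rightarrow> int \<Rightarrow> int \<times> int \<Rightarrow> int" where
  "rho p u v = (\<lambda>(a, b). (a * u + b * v) mod int p)"

definition plane :: "nat \<Rightarrow> int \<Rightarrow> int \<Rightarrow> ((int \<times> int) \<times> int) set" where
  "plane p u v = hom_graph (carrier (Cyc p \<times>\<times> Cyc p)) (rho p u v)"

definition Kl :: "nat \<Rightarrow> nat \<Rightarrow> (int \<times> int) set" where
  "Kl p i = (if i < p then {(a, b). 0 \<le> a \<and> a < int p \<and> b = (a * int i) mod int p}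
             else {(a, b). a = 0 \<and> 0 \<le> b \<and> b < int p})"

definition Ll :: "nat \<Rightarrow> int \<Rightarrow> int \<Rightarrow> nat \<Rightarrow> ((int \<times> int) \<times> int) set" where
  "Ll p u v i = hom_graph (Kl p i) (rho p u v)"

context
  fixes p :: nat
  assumes pp: "Factorial_Ring.prime p"
begin

lemma p0: "p \<noteq> 0" using pp by auto
lemma p2: "2 \<le> p" using pp by (simp add: prime_ge_2_nat)
lemma qp: "Factorial_Ring.prime (int p)" using pp by simp

lemma carrZ: "carrier (Cyc p) = {0..<int p}" using p0 by (simp add: Cyc_carrier)

lemma rho_hom: "rho p u v \<in> hom (Cyc p \<times>\<times> Cyc p) (Cyc p)"
proof -
  have "rho p u v x \<in> {0..<int p}" for x using p0 by (auto simp: rho_def split: prod.split)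
  moreover have "rho p u v ((a + a') mod int p, (b + b') mod int p) =
      (rho p u v (a, b) + rho p u v (a', b')) mod int p" for a a' b b'
  proof -
    have "rho p u v ((a + a') mod int p, (b + b') mod int p) = ((a + a') * u + (b + b') * v) mod int p"
      by (simp add: rho_def mod_lin)
    also have "\<dots> = ((a * u + b * v) + (a' * u + b' * v)) mod int p" by (simp add: algebra_simps)
    also have "\<dots> = (rho p u v (a, b) + rho p u v (a', b')) mod int p" by (simp add: rho_def mod_add_eq)
    finally show ?thesis .
  qed
  ultimately show ?thesis using p0 by (auto simp: hom_def carrZ)
qed

lemma rho_hom_restr: "K \<subseteq> carrier (Cyc p \<times>\<times> Cyc p) \<Longrightarrow>
    rho p u v \<in> hom ((Cyc p \<times>\<times> Cyc p)\<lparr>carrier := K\<rparr>) (Cyc p)"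
  by (rule hom_restr[OF rho_hom])

lemma Kl_carrier: "Kl p i \<subseteq> carrier (Cyc p \<times>\<times> Cyc p)"
  using p0 by (auto simp: Kl_def carrZ)

lemma Kl_sub: "subgroup (Kl p i) (Cyc p \<times>\<times> Cyc p)"
proof -
  interpret G2: comm_group "Cyc p \<times>\<times> Cyc p" by (rule G2_comm)
  show ?thesis
  proof (rule G2.subgroupI)
    show "Kl p i \<subseteq> carrier (Cyc p \<times>\<times> Cyc p)" by (rule Kl_carrier)
    show "Kl p i \<noteq> {}" using p0 by (auto simp: Kl_def intro!: exI[of _ 0])
  next
    fix x assume x: "x \<in> Kl p i"
    have "x \<in> carrier (Cyc p) \<times> carrier (Cyc p)" using x Kl_carrier by auto
    then obtain a b where ab: "x = (a, b)" "a \<in> carrier (Cyc p)" "b \<in> carrier (Cyc p)"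
      by (cases x) auto
    have inv: "inv\<^bsub>Cyc p \<times>\<times> Cyc p\<^esub> x = ((- a) mod int p, (- b) mod int p)" using ab by simp
    show "inv\<^bsub>Cyc p \<times>\<times> Cyc p\<^esub> x \<in> Kl p i"
    proof (cases "i < p")
      case True
      then have b: "b = (a * int i) mod int p" using x ab by (simp add: Kl_def)
      have "((- a) mod int p * int i) mod int p = (- b) mod int p"
        unfolding b by (simp add: mod_mult_left_eq mod_minus_eq)
      then show ?thesis using True inv p0 by (simp add: Kl_def)
    next
      case False then show ?thesis using inv x ab p0 by (simp add: Kl_def carrZ)
    qed
  next
    fix x y assume x: "x \<in> Kl p i" and y: "y \<in> Kl p i"
    then obtain a b a' b' where ab: "x = (a, b)" "y = (a', b')"
      using Kl_carrier by (cases x, cases y) auto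
    show "x \<otimes>\<^bsub>Cyc p \<times>\<times> Cyc p\<^esub> y \<in> Kl p i"
    proof (cases "i < p")
      case True
      then have b: "b = (a * int i) mod int p" "b' = (a' * int i) mod int p" using x y ab by (auto simp: Kl_def)
      have "((a + a') mod int p * int i) mod int p = (b + b') mod int p"
        unfolding b by (simp add: mod_mult_left_eq mod_add_eq distrib_right)
      then show ?thesis using True ab p0 by (simp add: Kl_def)
    next
      case False then show ?thesis using x y ab p0 by (auto simp: Kl_def)
    qed
  qed
qed

lemma Kl_card: "card (Kl p i) = p"
proof (cases "i < p")
  case True
  have "Kl p i = (\<lambda>a. (a, (a * int i) mod int p)) ` {0..<int p}" using True by (auto simp: Kl_def)
  moreover have "card ((\<lambda>a. (a, (a * int i) mod int p)) ` {0..<int p}) = p"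
    by (subst card_image) (auto simp: inj_on_def)
  ultimately show ?thesis by simp
next
  case False
  have "Kl p i = (\<lambda>b. (0, b)) ` {0..<int p}" using False by (auto simp: Kl_def)
  moreover have "card ((\<lambda>b. (0::int, b)) ` {0..<int p}) = p"
    by (subst card_image) (auto simp: inj_on_def)
  ultimately show ?thesis by simp
qed

lemma Kl_lt: "i < p \<Longrightarrow> (a, b) \<in> Kl p i \<longleftrightarrow> 0 \<le> a \<and> a < int p \<and> b = (a * int i) mod int p"
  by (simp add: Kl_def)

lemma Kl_p: "(a, b) \<in> Kl p p \<longleftrightarrow> a = 0 \<and> 0 \<le> b \<and> b < int p"
  by (simp add: Kl_def)

lemma Kl_disj:
  assumes "i \<le> p" "j \<le> p" "i \<noteq> j"
  shows "Kl p i \<inter> Kl p j = {(0, 0)}"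
proof
  show "{(0, 0)} \<subseteq> Kl p i \<inter> Kl p j" using p0 by (auto simp: Kl_def)
  show "Kl p i \<inter> Kl p j \<subseteq> {(0, 0)}"
  proof
    fix x assume x: "x \<in> Kl p i \<inter> Kl p j"
    obtain a b where ab: "x = (a, b)" by (cases x)
    show "x \<in> {(0, 0)}"
    proof (cases "i < p \<and> j < p")
      case True
      then have e: "b = (a * int i) mod int p" "b = (a * int j) mod int p" "0 \<le> a" "a < int p"
        using x ab by (auto simp: Kl_def)
      have "a = 0"
      proof (rule ccontr)
        assume "a \<noteq> 0"
        then have "int i = int j" using modmul_inj[OF qp, of a "int i" "int j"] e True by auto
        then show False using assms by simp
      qed
      then show ?thesis using e ab by simp
    next
      case False
      then have "(i = p \<and> j < p) \<or> (j = p \<and> i < p)" using assms by auto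
      then have "a = 0 \<and> b = (a * int i) mod int p \<or> a = 0 \<and> b = (a * int j) mod int p"
        using x ab Kl_lt Kl_p by auto
      then show ?thesis using ab by auto
    qed
  qed
qed

lemma Kl_union: "(\<Union>i\<le>p. Kl p i) = carrier (Cyc p \<times>\<times> Cyc p)"
proof
  show "(\<Union>i\<le>p. Kl p i) \<subseteq> carrier (Cyc p \<times>\<times> Cyc p)" using Kl_carrier by auto
  show "carrier (Cyc p \<times>\<times> Cyc p) \<subseteq> (\<Union>i\<le>p. Kl p i)"
  proof
    fix x assume x: "x \<in> carrier (Cyc p \<times>\<times> Cyc p)"
    obtain a b where ab: "x = (a, b)" "0 \<le> a" "a < int p" "0 \<le> b" "b < int p"
      using x by (cases x) (auto simp: carrZ)
    show "x \<in> (\<Union>i\<le>p. Kl p i)"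
    proof (cases "a = 0")
      case True
      then have "x \<in> Kl p p" using ab Kl_p by simp
      then show ?thesis by blast
    next
      case False
      then obtain i where i: "0 \<le> i" "i < int p" "(a * i) mod int p = b"
        using modmul_surj[OF qp, of a b] ab by auto
      have "x \<in> Kl p (nat i)" using i ab by (auto simp: Kl_def)
      moreover have "nat i \<le> p" using i by simp
      ultimately show ?thesis by blast
    qed
  qed
qed

end

abbreviation "G2p p \<equiv> Cyc p \<times>\<times> Cyc p"
abbreviation "Wp p \<equiv> (Cyc p \<times>\<times> Cyc p) \<times>\<times> Cyc p"

definition zline :: "nat \<Rightarrow> ((int \<times> int) \<times> int) set" where
  "zline p = (\<lambda>c. ((0, 0), c)) ` {0..<int p}"

context
  fixes p :: nat
  assumes pp: "Factorial_Ring.prime p"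
begin

lemma G2grp: "group (G2p p)" by (rule DirProd_group) simp_all
lemma Zgrp: "group (Cyc p)" by simp

lemma Kl_fin: "finite (Kl p i)" using Kl_card[OF pp, of i] p0[OF pp] card.infinite by fastforce

lemma plane_sub: "subgroup (plane p u v) (Wp p)"
  unfolding plane_def
  by (rule graph_subgroup[OF G2grp Zgrp group.subgroup_self[OF G2grp] rho_hom_restr[OF pp]]) simp

lemma plane_graph: "is_graph (G2p p) (Cyc p) (plane p u v)"
  unfolding is_graph_def plane_def
  using group.subgroup_self[OF G2grp] rho_hom_restr[OF pp] by blast

lemma plane_card: "card (plane p u v) = p * p"
  unfolding plane_def graph_card using G2_card p0[OF pp] by simp

lemma Ll_sub: "subgroup (Ll p u v i) (Wp p)"
  unfolding Ll_def
  by (rule graph_subgroup[OF G2grp Zgrp Kl_sub[OF pp] rho_hom_restr[OF pp Kl_carrier[OF pp]]])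

lemma Ll_graph: "is_graph (G2p p) (Cyc p) (Ll p u v i)"
  unfolding is_graph_def Ll_def
  using Kl_sub[OF pp] rho_hom_restr[OF pp Kl_carrier[OF pp]] by blast

lemma Ll_card: "card (Ll p u v i) = p"
  unfolding Ll_def graph_card using Kl_card[OF pp] by simp

lemma Ll_P: "Ll p u v i \<subseteq> plane p u v"
  unfolding Ll_def plane_def hom_graph_def using Kl_carrier[OF pp] by auto

lemma graph_inter: "hom_graph A \<rho> \<inter> hom_graph B \<rho> = hom_graph (A \<inter> B) \<rho>"
  by (auto simp: hom_graph_def)

lemma Ll_disj: "i \<le> p \<Longrightarrow> j \<le> p \<Longrightarrow> i \<noteq> j \<Longrightarrow> Ll p u v i \<inter> Ll p u v j = {\<one>\<^bsub>Wp p\<^esub>}"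
  unfolding Ll_def graph_inter using Kl_disj[OF pp] by (simp add: hom_graph_def rho_def)

lemma Ll_union: "(\<Union>i\<le>p. Ll p u v i) = plane p u v"
  unfolding Ll_def plane_def hom_graph_def Kl_union[OF pp, symmetric] by auto

lemma lineconf_inst: "lineconf (Wp p) p (plane p u v) (Ll p u v)"
  unfolding lineconf_def lineconf_axioms_def
proof (intro conjI allI impI)
  show "comm_group (Wp p)" by (rule W_comm)
  show "finite (carrier (Wp p))" by (rule W_fin[OF p0[OF pp]])
  show "2 \<le> p" by (rule p2[OF pp])
  show "subgroup (plane p u v) (Wp p)" by (rule plane_sub)
  show "card (plane p u v) = p * p" by (rule plane_card)
  show "(\<Union>i\<le>p. Ll p u v i) = plane p u v" by (rule Ll_union)
  fix i show "subgroup (Ll p u v i) (Wp p)" by (rule Ll_sub)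
  show "card (Ll p u v i) = p" by (rule Ll_card)
  show "Ll p u v i \<subseteq> plane p u v" by (rule Ll_P)
  fix j assume "i \<le> p" "j \<le> p" "i \<noteq> j"
  then show "Ll p u v i \<inter> Ll p u v j = {\<one>\<^bsub>Wp p\<^esub>}" by (rule Ll_disj)
qed

lemma plane_mem: "((a, b), c) \<in> plane p u v \<longleftrightarrow> 0 \<le> a \<and> a < int p \<and> 0 \<le> b \<and> b < int p \<and> c = (a * u + b * v) mod int p"
  unfolding plane_def graph_mem using p0[OF pp] by (auto simp: carrZ[OF pp] rho_def)

lemma plane_inj:
  assumes "0 \<le> u" "u < int p" "0 \<le> v" "v < int p" "0 \<le> u'" "u' < int p" "0 \<le> v'" "v' < int p"
    and eq: "plane p u v = plane p u' v'"
  shows "u = u' \<and> v = v'"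
proof -
  have p1: "1 < int p" using p2[OF pp] by simp
  have "((1, 0), u) \<in> plane p u v" using assms(1-4) p1 by (simp add: plane_mem)
  then have "((1, 0), u) \<in> plane p u' v'" using eq by simp
  then have "u = (1 * u' + 0 * v') mod int p" using plane_mem[of 1 0 u u' v'] by blast
  then have 1: "u = u'" using assms by simp
  have "((0, 1), v) \<in> plane p u v" using assms(1-4) p1 by (simp add: plane_mem)
  then have "((0, 1), v) \<in> plane p u' v'" using eq by simp
  then have "v = (0 * u' + 1 * v') mod int p" using plane_mem[of 0 1 v u' v'] by blast
  then have 2: "v = v'" using assms by simp
  show ?thesis using 1 2 by simp
qed

lemma zline_sub: "subgroup (zline p) (Wp p)"
proof -
  interpret W: group "Wp p" by (rule DirProd_group[OF G2grp Zgrp])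
  show ?thesis
  proof (rule W.subgroupI)
    show "zline p \<subseteq> carrier (Wp p)" using p0[OF pp] by (auto simp: zline_def carrZ[OF pp])
    show "zline p \<noteq> {}" using p0[OF pp] by (auto simp: zline_def)
  next
    fix a assume "a \<in> zline p"
    then obtain c where c: "a = ((0, 0), c)" "0 \<le> c" "c < int p" by (auto simp: zline_def)
    then have "inv\<^bsub>Wp p\<^esub> a = ((0, 0), (- c) mod int p)" using p0[OF pp]
      by (simp add: carrZ[OF pp] G2grp)
    then show "inv\<^bsub>Wp p\<^esub> a \<in> zline p" using p0[OF pp] by (auto simp: zline_def)
  next
    fix a b assume "a \<in> zline p" "b \<in> zline p"
    then show "a \<otimes>\<^bsub>Wp p\<^esub> b \<in> zline p" using p0[OF pp] by (auto simp: zline_def)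
  qed
qed

lemma zline_card: "card (zline p) = p"
  unfolding zline_def by (subst card_image) (auto simp: inj_on_def)

lemma zline_not_graph: "\<not> is_graph (G2p p) (Cyc p) (zline p)"
proof
  assume "is_graph (G2p p) (Cyc p) (zline p)"
  then obtain K \<rho> where L: "zline p = hom_graph K \<rho>" unfolding is_graph_def by blast
  have p1: "1 < int p" using p2[OF pp] by simp
  have "((0, 0), 0) \<in> hom_graph K \<rho>" "((0, 0), 1) \<in> hom_graph K \<rho>"
    unfolding L[symmetric] zline_def using p1 by auto
  then show False by (simp add: graph_mem)
qed

end

context
  fixes p :: nat
  assumes pp: "Factorial_Ring.prime p"
begin

lemma graph_classify:
  assumes L: "is_graph (G2p p) (Cyc p) L"
  shows "subgroup L (Wp p) \<and> (card L = 1 \<or> card L = p \<or> card L = p * p)"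
proof -
  obtain K where K: "subgroup K (G2p p)" "subgroup L (Wp p)" "card L = card K"
    using is_graph_props[OF G2grp[OF pp] Zgrp[OF pp] L] by blast
  interpret G2: group "G2p p" by (rule G2grp[OF pp])
  have "card (lcosets\<^bsub>G2p p\<^esub> K) * card K = order (G2p p)"
    by (rule G2.l_lagrange[OF _ K(1)]) (use p0[OF pp] in \<open>simp add: Cyc_carrier\<close>)
  also have "order (G2p p) = p ^ 2" using G2_card[OF p0[OF pp]] by (simp add: order_def power2_eq_square)
  finally have "card K dvd p ^ 2" by (metis dvd_triv_right)
  then obtain i where "i \<le> 2" "card K = p ^ i" using divides_primepow_nat[OF pp] by blast
  moreover have "i = 0 \<or> i = 1 \<or> i = 2" using \<open>i \<le> 2\<close> by arith
  ultimately have "card K = 1 \<or> card K = p \<or> card K = p * p"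
    by (auto simp: power2_eq_square)
  then show ?thesis using K by simp
qed

lemma graph_plane:
  assumes L: "is_graph (G2p p) (Cyc p) L" and cL: "card L = p * p"
  shows "\<exists>u v. 0 \<le> u \<and> u < int p \<and> 0 \<le> v \<and> v < int p \<and> L = plane p u v"
proof -
  obtain K \<rho> where K: "subgroup K (G2p p)" "\<rho> \<in> hom ((G2p p)\<lparr>carrier := K\<rparr>) (Cyc p)" "L = hom_graph K \<rho>"
    using L unfolding is_graph_def by blast
  have p_0: "p \<noteq> 0" using p0[OF pp] .
  have Kc: "K \<subseteq> carrier (G2p p)" using K(1) by (rule subgroup.subset)
  have "card K = p * p" using cL unfolding K(3) graph_card .
  then have "card K = card (carrier (G2p p))" using G2_card[OF p_0] by simp
  then have KG: "K = carrier (G2p p)"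
    using card_subset_eq[OF _ Kc] p_0 by (simp add: Cyc_carrier)
  have hom: "\<rho> \<in> hom (G2p p) (Cyc p)" using K(2) KG by (simp add: hom_def)
  interpret h: group_hom "G2p p" "Cyc p" \<rho>
    using hom G2grp[OF pp] by (simp add: group_hom_def group_hom_axioms_def)
  have p1: "1 < int p" using p2[OF pp] by simp
  have c10: "(1, 0) \<in> carrier (G2p p)" "(0, 1) \<in> carrier (G2p p)" using p1 by (auto simp: carrZ[OF pp])
  define u where "u = \<rho> (1, 0)"
  define v where "v = \<rho> (0, 1)"
  have uv: "u \<in> carrier (Cyc p)" "v \<in> carrier (Cyc p)" using c10 h.hom_closed by (auto simp: u_def v_def)
  have eq: "\<rho> (a, b) = rho p u v (a, b)" if ab: "(a, b) \<in> carrier (G2p p)" for a b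
  proof -
    have ab': "0 \<le> a" "a < int p" "0 \<le> b" "b < int p" using ab by (auto simp: carrZ[OF pp])
    have e1: "(1, 0) [^]\<^bsub>G2p p\<^esub> nat a = (a, 0)" using ab' by (simp add: DirProd_pow)
    have e2: "(0, 1) [^]\<^bsub>G2p p\<^esub> nat b = (0, b)" using ab' by (simp add: DirProd_pow)
    have e3: "(a, b) = (a, 0) \<otimes>\<^bsub>G2p p\<^esub> (0, b)" using ab' by simp
    have "\<rho> (a, b) = \<rho> ((1, 0) [^]\<^bsub>G2p p\<^esub> nat a \<otimes>\<^bsub>G2p p\<^esub> (0, 1) [^]\<^bsub>G2p p\<^esub> nat b)"
      using e1 e2 e3 by simp
    also have "\<dots> = \<rho> ((1, 0) [^]\<^bsub>G2p p\<^esub> nat a) \<otimes>\<^bsub>Cyc p\<^esub> \<rho> ((0, 1) [^]\<^bsub>G2p p\<^esub> nat b)"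
      by (rule h.hom_mult; rule h.G.nat_pow_closed; rule c10)
    also have "\<dots> = (u [^]\<^bsub>Cyc p\<^esub> nat a) \<otimes>\<^bsub>Cyc p\<^esub> (v [^]\<^bsub>Cyc p\<^esub> nat b)"
      using c10 h.hom_nat_pow by (simp add: u_def v_def)
    also have "\<dots> = ((a * u) mod int p + (b * v) mod int p) mod int p" using ab' by simp
    also have "\<dots> = rho p u v (a, b)" by (simp add: rho_def mod_add_eq)
    finally show ?thesis .
  qed
  have "L = plane p u v"
    unfolding K(3) KG plane_def hom_graph_def using eq by (intro image_cong refl) auto
  then show ?thesis using uv by (auto simp: carrZ[OF pp])
qed

end

context
  fixes p :: nat
  assumes pp: "Factorial_Ring.prime p"
begin

definition rrP :: "int \<Rightarrow> int \<Rightarrow> ((int \<times> int) \<times> int) set \<Rightarrow> int" where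
  "rrP u v = lineconf.rr (Wp p) p (plane p u v) (Ll p u v)"

lemma pp_ne: "p * p \<noteq> p" "p * p \<noteq> 1" "p \<noteq> 1"
proof -
  have "p * 2 \<le> p * p" using p2[OF pp] by (intro mult_le_mono2) auto
  then show "p * p \<noteq> p" "p * p \<noteq> 1" "p \<noteq> 1" using p2[OF pp] by linarith+
qed

lemma one_W: "\<one>\<^bsub>Wp p\<^esub> = ((0, 0), 0)" by simp

lemma rrP_at:
  assumes "0 \<le> u" "u < int p" "0 \<le> v" "v < int p" "0 \<le> u'" "u' < int p" "0 \<le> v'" "v' < int p"
  shows "rrP u v (plane p u' v') = (if u = u' \<and> v = v' then int p else 0)"
proof -
  interpret LC: lineconf "Wp p" p "plane p u v" "Ll p u v" by (rule lineconf_inst[OF pp])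
  have n1: "plane p u' v' \<noteq> {\<one>\<^bsub>Wp p\<^esub>}"
  proof
    assume "plane p u' v' = {\<one>\<^bsub>Wp p\<^esub>}"
    then have "card (plane p u' v') = 1" by simp
    then show False using plane_card[OF pp] pp_ne by simp
  qed
  have n2: "plane p u' v' \<notin> Ll p u v ` {..p}"
  proof
    assume "plane p u' v' \<in> Ll p u v ` {..p}"
    then obtain i where "plane p u' v' = Ll p u v i" by blast
    then have "card (plane p u' v') = p" using Ll_card[OF pp] by simp
    then show False using plane_card[OF pp] pp_ne by simp
  qed
  show ?thesis
  proof (cases "u = u' \<and> v = v'")
    case True
    then have "u' = u" "v' = v" by auto
    then show ?thesis using LC.rr_P True by (simp add: rrP_def)
  next
    case False
    then have "plane p u' v' \<noteq> plane p u v" using plane_inj[OF pp, of u' v' u v] assms by auto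
    then have "rrP u v (plane p u' v') = 0" using n1 n2 by (simp add: rrP_def LC.rr_def)
    then show ?thesis using False by (simp only: if_False)
  qed
qed

lemma triv_graph: "is_graph (G2p p) (Cyc p) {\<one>\<^bsub>Wp p\<^esub>}"
proof -
  have sub: "subgroup {\<one>\<^bsub>G2p p\<^esub>} (G2p p)" by (rule group.triv_subgroup[OF G2grp[OF pp]])
  have hom: "(\<lambda>_. 0) \<in> hom ((G2p p)\<lparr>carrier := {\<one>\<^bsub>G2p p\<^esub>}\<rparr>) (Cyc p)"
    using p0[OF pp] by (auto simp: hom_def carrZ[OF pp])
  have "{\<one>\<^bsub>Wp p\<^esub>} = hom_graph {\<one>\<^bsub>G2p p\<^esub>} (\<lambda>_. 0)" by (simp add: hom_graph_def)
  then show ?thesis unfolding is_graph_def using sub hom by blast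
qed

lemma rrP_M:
  assumes "0 \<le> u" "u < int p" "0 \<le> v" "v < int p"
  shows "rrP u v \<in> kernel_bi (G2p p) (Cyc p)"
proof -
  interpret LC: lineconf "Wp p" p "plane p u v" "Ll p u v" by (rule lineconf_inst[OF pp])
  have K: "rrP u v \<in> burnside_kernel (Wp p)" unfolding rrP_def by (rule LC.rr_kernel)
  have "rrP u v \<in> burnside_bi (G2p p) (Cyc p)"
  proof -
    have "rrP u v \<in> burnside (Wp p)" using K by (simp add: burnside_kernel_def)
    moreover have "is_graph (G2p p) (Cyc p) L" if "rrP u v L \<noteq> 0" for L
    proof -
      have "L = {\<one>\<^bsub>Wp p\<^esub>} \<or> L = plane p u v \<or> L \<in> Ll p u v ` {..p}"
        using that by (auto simp: rrP_def LC.rr_def split: if_splits)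
      then show ?thesis using triv_graph plane_graph[OF pp] Ll_graph[OF pp] by auto
    qed
    ultimately show ?thesis by (auto simp: burnside_bi_def)
  qed
  then show ?thesis using K by (simp add: kernel_bi_def)
qed

abbreviation "Sq \<equiv> {0..<int p} \<times> {0..<int p}"

lemma card_Sq: "card Sq = p * p" by (simp add: card_cartesian_product)

lemma lower:
  "\<exists>A. A \<subseteq> kernel_bi (G2p p) (Cyc p) \<and> finite A \<and> card A = p * p \<and> int_indep A"
proof -
  define A where "A = (\<lambda>(u, v). rrP u v) ` Sq"
  have inj: "inj_on (\<lambda>(u, v). rrP u v) Sq"
  proof (rule inj_onI)
    fix x y assume x: "x \<in> Sq" and y: "y \<in> Sq" and r0: "(\<lambda>(u, v). rrP u v) x = (\<lambda>(u, v). rrP u v) y"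
    obtain u v where xx: "x = (u, v)" by (cases x)
    obtain u' v' where yy: "y = (u', v')" by (cases y)
    have r: "rrP u v = rrP u' v'" using r0 xx yy by simp
    have b: "0 \<le> u" "u < int p" "0 \<le> v" "v < int p" "0 \<le> u'" "u' < int p" "0 \<le> v'" "v' < int p"
      using x y xx yy by auto
    have "rrP u v (plane p u v) = int p" using rrP_at[of u v u v] b by simp
    moreover have "rrP u' v' (plane p u v) = (if u' = u \<and> v' = v then int p else 0)"
      using rrP_at[of u' v' u v] b by blast
    ultimately have e: "(if u' = u \<and> v' = v then int p else 0) = int p" using r by simp
    have "u' = u \<and> v' = v"
    proof (rule ccontr)
      assume nc: "\<not> (u' = u \<and> v' = v)"
      have "0 = int p" using e unfolding if_not_P[OF nc] .
      then show False using p0[OF pp] by simp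
    qed
    then show "x = y" using xx yy by simp
  qed
  have cA: "card A = p * p" unfolding A_def using card_image[OF inj] card_Sq by simp
  have sub: "A \<subseteq> kernel_bi (G2p p) (Cyc p)" unfolding A_def using rrP_M by auto
  have ind: "int_indep A"
    unfolding int_indep_def
  proof (intro allI impI ballI)
    fix c :: "(((int \<times> int) \<times> int) set \<Rightarrow> int) \<Rightarrow> int" and w
    assume z: "(\<lambda>S. \<Sum>w\<in>A. c w * w S) = (\<lambda>S. 0)" and w: "w \<in> A"
    then obtain u v where uv: "(u, v) \<in> Sq" "w = rrP u v" unfolding A_def by auto
    have "0 = (\<Sum>w'\<in>A. c w' * w' (plane p u v))" using fun_cong[OF z, of "plane p u v"] by simp
    also have "\<dots> = c w * w (plane p u v) + (\<Sum>w'\<in>A - {w}. c w' * w' (plane p u v))"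
      using w by (simp add: A_def sum.remove)
    also have "(\<Sum>w'\<in>A - {w}. c w' * w' (plane p u v)) = 0"
    proof (rule sum.neutral, rule ballI)
      fix w' assume "w' \<in> A - {w}"
      then obtain u' v' where "(u', v') \<in> Sq" "w' = rrP u' v'" "w' \<noteq> w" unfolding A_def by auto
      then show "c w' * w' (plane p u v) = 0" using rrP_at[of u' v' u v] uv by auto
    qed
    also have "w (plane p u v) = int p" using uv rrP_at[of u v u v] by simp
    finally show "c w = 0" using p0[OF pp] by simp
  qed
  show ?thesis using sub cA ind A_def by (intro exI[of _ A]) auto
qed

lemma upper:
  assumes A: "A \<subseteq> kernel_bi (G2p p) (Cyc p)" "finite A" "int_indep A"
  shows "card A \<le> p * p"
proof (rule ccontr)
  assume "\<not> card A \<le> p * p"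
  then have lt: "p * p < card A" by simp
  define PL where "PL = (\<lambda>(u, v). plane p u v) ` Sq"
  have fPL: "finite PL" unfolding PL_def by simp
  have cPL: "card PL \<le> p * p" unfolding PL_def using card_image_le[of Sq "\<lambda>(u, v). plane p u v"] card_Sq by simp
  have "card PL < card A" using cPL lt by simp
  from elim_lemma[OF fPL A(2) this, of "\<lambda>v S. v S"] obtain c where
    c: "\<exists>v\<in>A. c v \<noteq> 0" "\<forall>S\<in>PL. (\<Sum>v\<in>A. c v * v S) = 0" by blast
  define y where "y = (\<lambda>S. \<Sum>v\<in>A. c v * v S)"
  have Ak: "v \<in> burnside_kernel (Wp p)" if "v \<in> A" for v using A(1) that by (auto simp: kernel_bi_def)
  have gr: "is_graph (G2p p) (Cyc p) S" if "v \<in> A" "v S \<noteq> 0" for v S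
    using A(1) that by (auto simp: kernel_bi_def burnside_bi_def)
  have nz: "\<exists>v\<in>A. v S \<noteq> 0" if "y S \<noteq> 0" for S
  proof (rule ccontr)
    assume "\<not> (\<exists>v\<in>A. v S \<noteq> 0)"
    then have "y S = 0" unfolding y_def by (intro sum.neutral) auto
    then show False using that by simp
  qed
  have y0: "y = (\<lambda>_. 0)"
  proof (rule pcube.ub_zero[OF W_pcube[OF pp], where Z = "zline p"])
    fix S assume yS: "y S \<noteq> 0"
    then obtain v where v: "v \<in> A" "v S \<noteq> 0" using nz by blast
    have g: "is_graph (G2p p) (Cyc p) S" by (rule gr[OF v])
    have cl: "subgroup S (Wp p) \<and> (card S = 1 \<or> card S = p \<or> card S = p * p)"
      by (rule graph_classify[OF pp g])
    have "card S \<noteq> p * p"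
    proof
      assume "card S = p * p"
      then obtain u w where "0 \<le> u" "u < int p" "0 \<le> w" "w < int p" "S = plane p u w"
        using graph_plane[OF pp g] by blast
      then have "S \<in> PL" unfolding PL_def by auto
      then show False using c(2) yS by (simp add: y_def)
    qed
    then show "subgroup S (Wp p) \<and> (card S = 1 \<or> card S = p)" using cl by blast
  next
    show "subgroup (zline p) (Wp p)" by (rule zline_sub[OF pp])
    show "card (zline p) = p" by (rule zline_card[OF pp])
    show "y (zline p) = 0"
    proof (rule ccontr)
      assume "y (zline p) \<noteq> 0"
      then obtain v where "v \<in> A" "v (zline p) \<noteq> 0" using nz by blast
      then show False using gr zline_not_graph[OF pp] by blast
    qed
  next
    fix C assume C: "subgroup C (Wp p)" "C = carrier (Wp p) \<or> card C = p"
    have fS: "finite {S. subgroup S (Wp p)}"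
      by (rule comm_group.finite_subgroups[OF W_comm W_fin[OF p0[OF pp]]])
    have "(\<Sum>S\<in>{S. subgroup S (Wp p)}. y S * int (card (lcosets\<^bsub>Wp p\<^esub> (S <#>\<^bsub>Wp p\<^esub> C))))
        = (\<Sum>S\<in>{S. subgroup S (Wp p)}. \<Sum>v\<in>A. c v * (v S * int (card (lcosets\<^bsub>Wp p\<^esub> (S <#>\<^bsub>Wp p\<^esub> C)))))"
      unfolding y_def by (simp add: sum_distrib_right mult.assoc)
    also have "\<dots> = (\<Sum>v\<in>A. c v * (\<Sum>S\<in>{S. subgroup S (Wp p)}. v S * int (card (lcosets\<^bsub>Wp p\<^esub> (S <#>\<^bsub>Wp p\<^esub> C)))))"
      by (subst sum.swap) (simp add: sum_distrib_left)
    also have "\<dots> = 0"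
      using comm_group.kernel_equation[OF W_comm W_fin[OF p0[OF pp]] C(1) Ak] by simp
    finally show "(\<Sum>S\<in>{S. subgroup S (Wp p)}. y S * int (card (lcosets\<^bsub>Wp p\<^esub> (S <#>\<^bsub>Wp p\<^esub> C)))) = 0" .
  qed
  then have "\<forall>v\<in>A. c v = 0" using A(3) unfolding int_indep_def y_def by blast
  with c(1) show False by blast
qed

end

theorem mainTheorem16:
  fixes p :: nat
  assumes "Factorial_Ring.prime p"
  shows "zrank (kernel_bi (Cyc p \<times>\<times> Cyc p) (Cyc p)) = p ^ 2"
  unfolding zrank_def
proof (rule Greatest_equality)
  show "\<exists>A. A \<subseteq> kernel_bi (Cyc p \<times>\<times> Cyc p) (Cyc p) \<and> finite A \<and> card A = p ^ 2 \<and> int_indep A"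
    using lower[OF assms] by (simp add: power2_eq_square)
next
  fix n assume "\<exists>A. A \<subseteq> kernel_bi (Cyc p \<times>\<times> Cyc p) (Cyc p) \<and> finite A \<and> card A = n \<and> int_indep A"
  then obtain A where A: "A \<subseteq> kernel_bi (Cyc p \<times>\<times> Cyc p) (Cyc p)" "finite A" "card A = n" "int_indep A" by blast
  have "card A \<le> p * p" by (rule upper[OF assms A(1,2,4)])
  then show "n \<le> p ^ 2" using A(3) by (simp add: power2_eq_square)
qed

end
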